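(* Let $V=\mathbb{C}^n$ be the defining representation of $GL_n(\mathbb{C})$ restricted to $T\rtimes S_n$, and let $k_1,\dots,k_m\ge 0$. Let $A^n_{k_1,\dots,k_m}$ be the set of $(k_1+1)\times\dots\times(k_m+1)$ arrays $B=(b_{i_1,\dots,i_m})_{0\le i_j\le k_j}$ such that the $(0,\dots,0)$ entry is left blank, all other entries are nonnegative integers, $\sum_{i_1,\dots,i_m}i_j\,b_{i_1,\dots,i_m}=k_j$ for every $j$, and the sum of all entries is at most $n$. Then, as representations of $T\rtimes S_n$, $$\mathrm{Sym}^{k_1}(V)\otimes\dots\otimes\mathrm{Sym}^{k_m}(V)\cong\bigoplus_{B\in A^n_{k_1,\dots,k_m}}\tilde{M}(\lambda_1(B),\lambda_2(B),\dots,\lambda_{k_1+\dots+k_m}(B)),$$ where $\lambda_\ell(B)$ is the partition whose parts are the nonzero entries $b_{i_1,\dots,i_m}$ with $i_1+\dots+i_m=\ell$.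
   Context: Let $T\subset GL_n(\mathbb{C})$ be the diagonal torus, $S_n$ the permutation matrices, and $T\rtimes S_n\cong\mathbb{C}^\times\wr S_n$ the monomial matrices. For a partition $\lambda$ of $r$ and integer $k$, $S^{\lambda,k}$ is the representation of $\mathbb{C}^\times\wr S_r$ on the Specht module $S^\lambda$ with each copy of $\mathbb{C}^\times$ acting by $z\mapsto z^k$. For a composition $\nu=(\nu_1,\dots,\nu_\ell)$ of $n$ and integers $\mathbf{w}$, $M(\nu,\mathbf{w}):=\mathrm{Ind}_{(\mathbb{C}^\times\wr S_{\nu_1})\times\dots\times(\mathbb{C}^\times\wr S_{\nu_\ell})}^{\mathbb{C}^\times\wr S_n}(S^{(\nu_1),w_1}\otimes\dots\otimes S^{(\nu_\ell),w_\ell})$ (block-diagonal subgroup). For partitions $\lambda^1,\dots,\lambda^j$, $\lambda^i=(\lambda^i_1,\dots,\lambda^i_{\ell_i})$, of total size $m\le n$, $\tilde{M}(\lambda^1,\dots,\lambda^j):=M((n-m,\lambda^1_1,\dots,\lambda^1_{\ell_1},\dots,\lambda^j_1,\dots,\lambda^j_{\ell_j}),(0,1,\dots,1,\dots,j,\dots,j))$ with $\ell_i$ entries equal to $i$ (the part $n-m$ omitted if zero). *)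

theory Defs
  imports Complex_Main "HOL-Library.Multiset"
begin

text \<open>Group elements: n x n complex matrices, encoded as functions nat => nat => complex
  with all entries outside {0..<n} x {0..<n} equal to zero.\<close>

type_synonym cmat = "nat \<Rightarrow> nat \<Rightarrow> complex"

definition mmul :: "nat \<Rightarrow> cmat \<Rightarrow> cmat \<Rightarrow> cmat" where
  "mmul n g h = (\<lambda>i j. if i < n \<and> j < n then (\<Sum>l<n. g i l * h l j) else 0)"

text \<open>Monomial matrices T \<rtimes> S_n inside GL_n(C): exactly one nonzero entry in each row and column.\<close>
definition monomial_group :: "nat \<Rightarrow> cmat set" where
  "monomial_group n = {g. (\<forall>i j. (n \<le> i \<or> n \<le> j) \<longrightarrow> g i j = 0)
      \<and> (\<forall>j<n. \<exists>!i. i < n \<and> g i j \<noteq> 0) \<and> (\<forall>i<n. \<exists>!j. j < n \<and> g i j \<noteq> 0)}"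

text \<open>A finite-dimensional representation with basis X: K g y x is the coefficient of
  e_y in g . e_x.\<close>
type_synonym ('g,'x) rep = "'x set \<times> ('g \<Rightarrow> 'x \<Rightarrow> 'x \<Rightarrow> complex)"

definition rep_iso :: "'g set \<Rightarrow> ('g,'x) rep \<Rightarrow> ('g,'y) rep \<Rightarrow> bool" where
  "rep_iso G R S = (case R of (X, K) \<Rightarrow> case S of (Y, L) \<Rightarrow>
     finite X \<and> finite Y \<and>
     (\<exists>(P :: 'y \<Rightarrow> 'x \<Rightarrow> complex) (Q :: 'x \<Rightarrow> 'y \<Rightarrow> complex).
        (\<forall>x\<in>X. \<forall>x'\<in>X. (\<Sum>y\<in>Y. Q x y * P y x') = (if x = x' then 1 else 0)) \<and>
        (\<forall>y\<in>Y. \<forall>y'\<in>Y. (\<Sum>x\<in>X. P y x * Q x y') = (if y = y' then 1 else 0)) \<and>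
        (\<forall>g\<in>G. \<forall>y\<in>Y. \<forall>x\<in>X.
            (\<Sum>y'\<in>Y. L g y y' * P y' x) = (\<Sum>x'\<in>X. P y x' * K g x' x))))"

definition defrep :: "nat \<Rightarrow> (cmat, nat) rep" where
  "defrep n = ({..<n}, (\<lambda>g i j. g i j))"

text \<open>Symmetric power Sym^k: basis = monomials (multisets of size k of basis vectors);
  g . (x_1 ... x_k) = prod_i (sum_y K g y x_i  y).\<close>
definition symrep :: "nat \<Rightarrow> ('g,'x) rep \<Rightarrow> ('g, 'x multiset) rep" where
  "symrep k R = (case R of (X, K) \<Rightarrow>
     ({\<alpha>. set_mset \<alpha> \<subseteq> X \<and> size \<alpha> = k},
      (\<lambda>g \<beta> \<alpha>. let xs = (SOME xs. mset xs = \<alpha>) in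
          \<Sum>ys\<in>{ys. length ys = k \<and> mset ys = \<beta>}. \<Prod>i<k. K g (ys ! i) (xs ! i))))"

definition tensor_list :: "('g,'x) rep list \<Rightarrow> ('g, 'x list) rep" where
  "tensor_list Rs =
     ({xs. length xs = length Rs \<and> (\<forall>i<length Rs. xs ! i \<in> fst (Rs ! i))},
      (\<lambda>g ys xs. \<Prod>i<length Rs. snd (Rs ! i) g (ys ! i) (xs ! i)))"

definition dsum :: "'a set \<Rightarrow> ('a \<Rightarrow> ('g,'x) rep) \<Rightarrow> ('g, 'a \<times> 'x) rep" where
  "dsum A R = (Sigma A (\<lambda>a. fst (R a)),
      (\<lambda>g (a', y) (a, x). if a = a' then snd (R a) g y x else 0))"

text \<open>Basis: left cosets c = gH; g . (r_c \<otimes> 1) = chi(h) (r_c' \<otimes> 1) where g r_c = r_c' h,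
  with r_c a chosen representative of c.\<close>
definition ind_char :: "('g \<Rightarrow> 'g \<Rightarrow> 'g) \<Rightarrow> 'g set \<Rightarrow> 'g set \<Rightarrow> ('g \<Rightarrow> complex) \<Rightarrow> ('g, 'g set) rep" where
  "ind_char mul G H chi =
     ((\<lambda>g. (\<lambda>h. mul g h) ` H) ` G,
      (\<lambda>g c' c. let r = (\<lambda>c. SOME x. x \<in> c) in
         if \<exists>h\<in>H. mul g (r c) = mul (r c') h
         then chi (THE h. h \<in> H \<and> mul g (r c) = mul (r c') h) else 0))"

definition block :: "nat list \<Rightarrow> nat \<Rightarrow> nat set" where
  "block nu b = {sum_list (take b nu) ..< sum_list (take (Suc b) nu)}"

text \<open>Block-diagonal subgroup (C^x wr S_nu1) x ... x (C^x wr S_nul).\<close>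
definition block_subgroup :: "nat \<Rightarrow> nat list \<Rightarrow> cmat set" where
  "block_subgroup n nu = {g \<in> monomial_group n.
      \<forall>i j. g i j \<noteq> 0 \<longrightarrow> (\<exists>b<length nu. i \<in> block nu b \<and> j \<in> block nu b)}"

text \<open>Column sum = the unique nonzero entry of a column of a monomial matrix.\<close>
definition colent :: "nat \<Rightarrow> cmat \<Rightarrow> nat \<Rightarrow> complex" where
  "colent n g j = (\<Sum>i<n. g i j)"

text \<open>The character S^{(nu_1),w_1} \<otimes> ... \<otimes> S^{(nu_l),w_l}: trivial Specht modules, the copies of
  C^x in block b acting by z \<mapsto> z^{w_b}.\<close>
definition block_char :: "nat \<Rightarrow> nat list \<Rightarrow> int list \<Rightarrow> cmat \<Rightarrow> complex" where
  "block_char n nu w h = (\<Prod>b<length nu. (\<Prod>j\<in>block nu b. colent n h j) powi (w ! b))"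

definition Mrep :: "nat \<Rightarrow> nat list \<Rightarrow> int list \<Rightarrow> (cmat, cmat set) rep" where
  "Mrep n nu w = ind_char (mmul n) (monomial_group n) (block_subgroup n nu) (block_char n nu w)"

definition Mtilde :: "nat \<Rightarrow> nat list list \<Rightarrow> (cmat, cmat set) rep" where
  "Mtilde n lams = (let m = sum_list (map sum_list lams);
       nu = (if n - m = 0 then [] else [n - m]) @ concat lams;
       w = (if n - m = 0 then [] else [0]) @
           concat (map (\<lambda>(i, lam). replicate (length lam) (int i)) (zip [1..<Suc (length lams)] lams))
     in Mrep n nu w)"

definition arr_index :: "nat list \<Rightarrow> nat list set" where
  "arr_index ks = {is. length is = length ks \<and> (\<forall>j<length ks. is ! j \<le> ks ! j)
                        \<and> is \<noteq> replicate (length ks) 0}"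

definition arrays :: "nat \<Rightarrow> nat list \<Rightarrow> (nat list \<Rightarrow> nat) set" where
  "arrays n ks = {B. (\<forall>is. is \<notin> arr_index ks \<longrightarrow> B is = 0)
     \<and> (\<forall>j<length ks. (\<Sum>is\<in>arr_index ks. is ! j * B is) = ks ! j)
     \<and> (\<Sum>is\<in>arr_index ks. B is) \<le> n}"

definition lam_part :: "nat list \<Rightarrow> (nat list \<Rightarrow> nat) \<Rightarrow> nat \<Rightarrow> nat list" where
  "lam_part ks B l = rev (sorted_list_of_multiset
     (image_mset B (filter_mset (\<lambda>is. sum_list is = l \<and> B is \<noteq> 0) (mset_set (arr_index ks)))))"

end

theory Submission
  imports Defs
begin


definition sg :: "nat \<Rightarrow> cmat \<Rightarrow> nat \<Rightarrow> nat" where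
  "sg n g a = (THE i. i < n \<and> g i a \<noteq> 0)"
definition idm :: "nat \<Rightarrow> cmat" where
  "idm n = (\<lambda>i j. if i < n \<and> i = j then 1 else 0)"
definition invm :: "nat \<Rightarrow> cmat \<Rightarrow> cmat" where
  "invm n g = (\<lambda>i j. if i < n \<and> j < n \<and> g j i \<noteq> 0 then 1 / g j i else 0)"

lemma mg_out: "g \<in> monomial_group n \<Longrightarrow> g i j \<noteq> 0 \<Longrightarrow> i < n \<and> j < n"
  unfolding monomial_group_def by (metis (mono_tags, lifting) mem_Collect_eq not_le)

lemma mg_col: "g \<in> monomial_group n \<Longrightarrow> a < n \<Longrightarrow> \<exists>!i. i < n \<and> g i a \<noteq> 0"
  by (simp add: monomial_group_def)
lemma mg_row: "g \<in> monomial_group n \<Longrightarrow> i < n \<Longrightarrow> \<exists>!j. j < n \<and> g i j \<noteq> 0"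
  by (simp add: monomial_group_def)

lemma sg_props: assumes "g \<in> monomial_group n" "a < n"
  shows "sg n g a < n \<and> g (sg n g a) a \<noteq> 0"
proof -
  from assms have "\<exists>!i. i < n \<and> g i a \<noteq> 0" by (rule mg_col)
  then show ?thesis unfolding sg_def by (rule theI')
qed

lemma sg_unique: assumes "g \<in> monomial_group n" "g i a \<noteq> 0"
  shows "sg n g a = i"
proof -
  have "i < n" "a < n" using mg_out[OF assms] by auto
  show ?thesis unfolding sg_def
    by (rule the1_equality[OF mg_col[OF assms(1) \<open>a < n\<close>]]) (use assms \<open>i < n\<close> in simp)
qed

lemma row_unique: assumes "g \<in> monomial_group n" "g i a \<noteq> 0" "g i b \<noteq> 0"
  shows "a = b"
proof -
  have "i < n" "a < n" "b < n" using mg_out[OF assms(1,2)] mg_out[OF assms(1,3)] by auto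
  from mg_row[OF assms(1) \<open>i < n\<close>] show ?thesis using assms \<open>a < n\<close> \<open>b < n\<close>
    by (metis)
qed

lemma sg_inj: assumes "g \<in> monomial_group n" shows "inj_on (sg n g) {..<n}"
proof
  fix a b assume "a \<in> {..<n}" "b \<in> {..<n}" "sg n g a = sg n g b"
  then show "a = b" using sg_props[OF assms] row_unique[OF assms] by (metis lessThan_iff)
qed

lemma sg_image: assumes "g \<in> monomial_group n" shows "sg n g ` {..<n} = {..<n}"
  by (rule endo_inj_surj) (use sg_props[OF assms] sg_inj[OF assms] in auto)

lemma sg_lt: "g \<in> monomial_group n \<Longrightarrow> a < n \<Longrightarrow> sg n g a < n"
  using sg_props by blast
lemma sg_nz: "g \<in> monomial_group n \<Longrightarrow> a < n \<Longrightarrow> g (sg n g a) a \<noteq> 0"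
  using sg_props by blast

lemma mg_entry: assumes "g \<in> monomial_group n"
  shows "g i a = (if a < n \<and> i = sg n g a then g i a else 0)"
  using assms sg_unique mg_out by (metis)

lemma mmul_formula: assumes "g \<in> monomial_group n" "h \<in> monomial_group n"
  shows "mmul n g h i j = (if j < n \<and> i = sg n g (sg n h j) then g i (sg n h j) * h (sg n h j) j else 0)"
proof (cases "i < n \<and> j < n")
  case True
  have "(\<Sum>l<n. g i l * h l j) = (\<Sum>l<n. if l = sg n h j then g i (sg n h j) * h (sg n h j) j else 0)"
    apply (rule sum.cong, simp)
    using sg_unique[OF assms(2), of _ j] by fastforce
  also have "\<dots> = g i (sg n h j) * h (sg n h j) j" using sg_lt[OF assms(2)] True by simp
  also have "\<dots> = (if j < n \<and> i = sg n g (sg n h j) then g i (sg n h j) * h (sg n h j) j else 0)"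
    using sg_unique[OF assms(1), of i "sg n h j"] True by auto
  finally show ?thesis using True unfolding mmul_def by simp
next
  case False
  then show ?thesis unfolding mmul_def using sg_lt[OF assms(1)] sg_lt[OF assms(2)] by auto
qed

lemma mmul_closed: assumes "g \<in> monomial_group n" "h \<in> monomial_group n"
  shows "mmul n g h \<in> monomial_group n"
proof -
  let ?m = "mmul n g h"
  have out: "\<forall>i j. (n \<le> i \<or> n \<le> j) \<longrightarrow> ?m i j = 0"
    unfolding mmul_def by auto
  have nz: "?m i j \<noteq> 0 \<longleftrightarrow> j < n \<and> i = sg n g (sg n h j)" for i j
    using mmul_formula[OF assms, of i j] sg_nz[OF assms(1)] sg_nz[OF assms(2)] sg_lt[OF assms(2)]
    by auto
  have col: "\<forall>j<n. \<exists>!i. i < n \<and> ?m i j \<noteq> 0"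
    using nz sg_lt[OF assms(1)] sg_lt[OF assms(2)] by auto
  have row: "\<forall>i<n. \<exists>!j. j < n \<and> ?m i j \<noteq> 0"
  proof (intro allI impI)
    fix i assume "i < n"
    then obtain b where b: "b < n" "sg n g b = i" using sg_image[OF assms(1)] by (metis imageE lessThan_iff)
    then obtain j where j: "j < n" "sg n h j = b" using sg_image[OF assms(2)] by (metis imageE lessThan_iff)
    show "\<exists>!j. j < n \<and> ?m i j \<noteq> 0"
    proof (rule ex1I[of _ j])
      show "j < n \<and> ?m i j \<noteq> 0" using nz j b by auto
      fix j' assume "j' < n \<and> ?m i j' \<noteq> 0"
      then have "sg n g (sg n h j') = sg n g (sg n h j)" using nz j b by auto
      then have "sg n h j' = sg n h j" using sg_inj[OF assms(1)] sg_lt[OF assms(2)] \<open>j' < n \<and> _\<close> j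
        by (meson inj_onD lessThan_iff)
      then show "j' = j" using sg_inj[OF assms(2)] \<open>j' < n \<and> _\<close> j by (meson inj_onD lessThan_iff)
    qed
  qed
  show ?thesis unfolding monomial_group_def using out col row by (intro CollectI conjI)
qed

lemma sg_mmul: assumes "g \<in> monomial_group n" "h \<in> monomial_group n" "a < n"
  shows "sg n (mmul n g h) a = sg n g (sg n h a)"
  apply (rule sg_unique[OF mmul_closed[OF assms(1,2)]])
  using mmul_formula[OF assms(1,2)] assms sg_nz sg_lt by simp

lemma mmul_entry: assumes "g \<in> monomial_group n" "h \<in> monomial_group n" "a < n"
  shows "mmul n g h (sg n (mmul n g h) a) a = g (sg n g (sg n h a)) (sg n h a) * h (sg n h a) a"
  using mmul_formula[OF assms(1,2)] sg_mmul[OF assms] assms(3) by simp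

lemma mmul_assoc: assumes "g \<in> monomial_group n" "h \<in> monomial_group n" "k \<in> monomial_group n"
  shows "mmul n (mmul n g h) k = mmul n g (mmul n h k)"
proof (intro ext)
  fix i j
  show "mmul n (mmul n g h) k i j = mmul n g (mmul n h k) i j"
    using mmul_formula[OF mmul_closed[OF assms(1,2)] assms(3), of i j]
      mmul_formula[OF assms(1) mmul_closed[OF assms(2,3)], of i j]
      mmul_formula[OF assms(1,2)] mmul_formula[OF assms(2,3)]
      sg_mmul[OF assms(1,2)] sg_mmul[OF assms(2,3)] sg_lt[OF assms(3)]
    by (auto simp: mult.assoc)
qed

lemma idm_mg: "idm n \<in> monomial_group n"
  unfolding monomial_group_def idm_def by auto

lemma sg_idm: "a < n \<Longrightarrow> sg n (idm n) a = a"
  by (rule sg_unique[OF idm_mg]) (simp add: idm_def)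

lemma idm_left: assumes "g \<in> monomial_group n" shows "mmul n (idm n) g = g"
proof (intro ext)
  fix i j show "mmul n (idm n) g i j = g i j"
    using mmul_formula[OF idm_mg assms, of i j] sg_idm sg_lt[OF assms] mg_entry[OF assms, of i j]
    by (auto simp: idm_def)
qed

lemma idm_right: assumes "g \<in> monomial_group n" shows "mmul n g (idm n) = g"
proof (intro ext)
  fix i j show "mmul n g (idm n) i j = g i j"
    using mmul_formula[OF assms idm_mg, of i j] sg_idm sg_lt[OF assms] mg_entry[OF assms, of i j]
    by (auto simp: idm_def)
qed

lemma invm_mg: assumes "g \<in> monomial_group n" shows "invm n g \<in> monomial_group n"
proof -
  have nz: "invm n g i j \<noteq> 0 \<longleftrightarrow> i < n \<and> j < n \<and> g j i \<noteq> 0" for i j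
    unfolding invm_def by auto
  have col: "\<forall>j<n. \<exists>!i. i < n \<and> invm n g i j \<noteq> 0"
    using assms unfolding nz monomial_group_def by blast
  have row: "\<forall>i<n. \<exists>!j. j < n \<and> invm n g i j \<noteq> 0"
    using assms unfolding nz monomial_group_def by blast
  have out: "\<forall>i j. (n \<le> i \<or> n \<le> j) \<longrightarrow> invm n g i j = 0"
    unfolding invm_def by auto
  show ?thesis unfolding monomial_group_def using out col row by (intro CollectI conjI)
qed

lemma invm_left: assumes "g \<in> monomial_group n" shows "mmul n (invm n g) g = idm n"
proof (intro ext)
  fix i j
  have s: "j < n \<Longrightarrow> sg n (invm n g) (sg n g j) = j" for j
    apply (rule sg_unique[OF invm_mg[OF assms]])
    using sg_nz[OF assms] sg_lt[OF assms] by (simp add: invm_def)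
  show "mmul n (invm n g) g i j = idm n i j"
    using mmul_formula[OF invm_mg[OF assms] assms, of i j] s sg_nz[OF assms, of j] sg_lt[OF assms, of j]
    by (auto simp: idm_def invm_def)
qed

lemma invm_right: assumes "g \<in> monomial_group n" shows "mmul n g (invm n g) = idm n"
proof (intro ext)
  fix i j
  have s: "j < n \<Longrightarrow> sg n g (sg n (invm n g) j) = j" for j
  proof -
    assume "j < n"
    then obtain l where l: "l < n" "sg n g l = j" using sg_image[OF assms] by (metis imageE lessThan_iff)
    have "sg n (invm n g) j = l"
      apply (rule sg_unique[OF invm_mg[OF assms]])
      using sg_nz[OF assms] l \<open>j<n\<close> by (auto simp add: invm_def)
    then show ?thesis using l by simp
  qed
  show "mmul n g (invm n g) i j = idm n i j"
    using mmul_formula[OF assms invm_mg[OF assms], of i j] s sg_nz[OF invm_mg[OF assms], of j]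
      sg_lt[OF invm_mg[OF assms], of j]
    by (auto simp: idm_def invm_def)
qed



definition mono_iso :: "'g set \<Rightarrow> ('g,'x) rep \<Rightarrow> ('g,'y) rep \<Rightarrow> bool" where
  "mono_iso G R S = (finite (fst R) \<and> finite (fst S) \<and>
     (\<exists>\<phi> s. bij_betw \<phi> (fst R) (fst S) \<and> (\<forall>x\<in>fst R. s x \<noteq> 0) \<and>
       (\<forall>g\<in>G. \<forall>x\<in>fst R. \<forall>x'\<in>fst R. snd S g (\<phi> x') (\<phi> x) * s x = s x' * snd R g x' x)))"

lemma mono_rep_iso: assumes "mono_iso G R S" shows "rep_iso G R S"
proof -
  obtain X K where R: "R = (X, K)" by (cases R)
  obtain Y L where S: "S = (Y, L)" by (cases S)
  from assms obtain \<phi> s where fin: "finite X" "finite Y" and bij: "bij_betw \<phi> X Y"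
    and nz: "\<forall>x\<in>X. s x \<noteq> 0"
    and int: "\<forall>g\<in>G. \<forall>x\<in>X. \<forall>x'\<in>X. L g (\<phi> x') (\<phi> x) * s x = s x' * K g x' x"
    unfolding mono_iso_def R S by auto
  have inj: "inj_on \<phi> X" and img: "\<phi> ` X = Y" using bij unfolding bij_betw_def by auto
  define \<psi> where "\<psi> = the_inv_into X \<phi>"
  have psi1: "y \<in> Y \<Longrightarrow> \<psi> y \<in> X \<and> \<phi> (\<psi> y) = y" for y
    unfolding \<psi>_def using inj img by (metis f_the_inv_into_f the_inv_into_into subset_refl)
  have psi2: "x \<in> X \<Longrightarrow> y \<in> Y \<Longrightarrow> (\<phi> x = y) = (x = \<psi> y)" for x y
    using psi1 inj by (metis inj_onD)
  define P where "P = (\<lambda>y x. if y = \<phi> x then s x else 0 :: complex)"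
  define Q where "Q = (\<lambda>x y. if y = \<phi> x then 1 / s x else 0 :: complex)"
  have c1: "\<forall>x\<in>X. \<forall>x'\<in>X. (\<Sum>y\<in>Y. Q x y * P y x') = (if x = x' then 1 else 0)"
  proof (intro ballI)
    fix x x' assume x: "x \<in> X" and x': "x' \<in> X"
    have "(\<Sum>y\<in>Y. Q x y * P y x') = (\<Sum>y\<in>Y. if y = \<phi> x then (if x = x' then 1 else 0) else 0)"
      apply (rule sum.cong, simp)
      using nz x x' inj by (auto simp: P_def Q_def dest: inj_onD)
    also have "\<dots> = (if x = x' then 1 else 0)" using fin x img by auto
    finally show "(\<Sum>y\<in>Y. Q x y * P y x') = (if x = x' then 1 else 0)" .
  qed
  have c2: "\<forall>y\<in>Y. \<forall>y'\<in>Y. (\<Sum>x\<in>X. P y x * Q x y') = (if y = y' then 1 else 0)"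
  proof (intro ballI)
    fix y y' assume y: "y \<in> Y" and y': "y' \<in> Y"
    have "(\<Sum>x\<in>X. P y x * Q x y') = (\<Sum>x\<in>X. if x = \<psi> y then (if y = y' then 1 else 0) else 0)"
      apply (rule sum.cong, simp)
      using nz y y' psi1 psi2 by (auto simp: P_def Q_def)
    also have "\<dots> = (if y = y' then 1 else 0)" using fin y psi1 by auto
    finally show "(\<Sum>x\<in>X. P y x * Q x y') = (if y = y' then 1 else 0)" .
  qed
  have c3: "\<forall>g\<in>G. \<forall>y\<in>Y. \<forall>x\<in>X. (\<Sum>y'\<in>Y. L g y y' * P y' x) = (\<Sum>x'\<in>X. P y x' * K g x' x)"
  proof (intro ballI)
    fix g y x assume g: "g \<in> G" and y: "y \<in> Y" and x: "x \<in> X"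
    have "(\<Sum>y'\<in>Y. L g y y' * P y' x) = (\<Sum>y'\<in>Y. if y' = \<phi> x then L g y (\<phi> x) * s x else 0)"
      by (rule sum.cong) (auto simp: P_def)
    also have "\<dots> = L g y (\<phi> x) * s x" using fin x img by auto
    also have "\<dots> = s (\<psi> y) * K g (\<psi> y) x" using int g x psi1[OF y] by metis
    also have "\<dots> = (\<Sum>x'\<in>X. if x' = \<psi> y then s (\<psi> y) * K g (\<psi> y) x else 0)"
      using fin psi1[OF y] by auto
    also have "\<dots> = (\<Sum>x'\<in>X. P y x' * K g x' x)"
      apply (rule sum.cong, simp)
      using psi2 y psi1[OF y] by (auto simp: P_def)
    finally show "(\<Sum>y'\<in>Y. L g y y' * P y' x) = (\<Sum>x'\<in>X. P y x' * K g x' x)" .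
  qed
  have "\<exists>P Q.
        (\<forall>x\<in>X. \<forall>x'\<in>X. (\<Sum>y\<in>Y. Q x y * P y x') = (if x = x' then 1 else 0)) \<and>
        (\<forall>y\<in>Y. \<forall>y'\<in>Y. (\<Sum>x\<in>X. P y x * Q x y') = (if y = y' then 1 else 0)) \<and>
        (\<forall>g\<in>G. \<forall>y\<in>Y. \<forall>x\<in>X.
            (\<Sum>y'\<in>Y. L g y y' * P y' x) = (\<Sum>x'\<in>X. P y x' * K g x' x))"
    using c1 c2 c3 by blast
  then show ?thesis unfolding rep_iso_def R S using fin by simp
qed

lemma mono_dsum:
  assumes finA: "finite A" and finX: "finite X" and beta: "\<forall>x\<in>X. \<beta> x \<in> A"
    and comp: "\<forall>a\<in>A. mono_iso G ({x\<in>X. \<beta> x = a}, K) (R a)"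
    and blk: "\<forall>g\<in>G. \<forall>x\<in>X. \<forall>x'\<in>X. \<beta> x' \<noteq> \<beta> x \<longrightarrow> K g x' x = 0"
  shows "mono_iso G (X, K) (dsum A R)"
proof -
  define P where "P = (\<lambda>a \<phi> s. bij_betw \<phi> {x\<in>X. \<beta> x = a} (fst (R a)) \<and> (\<forall>x\<in>{x\<in>X. \<beta> x = a}. s x \<noteq> 0) \<and>
       (\<forall>g\<in>G. \<forall>x\<in>{x\<in>X. \<beta> x = a}. \<forall>x'\<in>{x\<in>X. \<beta> x = a}.
          snd (R a) g (\<phi> x') (\<phi> x) * s x = s x' * K g x' x))"
  have "\<forall>a\<in>A. \<exists>\<phi> s. P a \<phi> s"
  proof
    fix a assume "a \<in> A"
    then have "mono_iso G ({x\<in>X. \<beta> x = a}, K) (R a)" using comp by (rule bspec[rotated])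
    then show "\<exists>\<phi> s. P a \<phi> s"
      unfolding mono_iso_def fst_conv snd_conv P_def by (elim conjE) assumption
  qed
  then have "\<exists>\<Phi>. \<forall>a\<in>A. \<exists>s. P a (\<Phi> a) s" by (rule bchoice)
  then obtain \<Phi> where "\<forall>a\<in>A. \<exists>s. P a (\<Phi> a) s" by (rule exE)
  then have "\<exists>S. \<forall>a\<in>A. P a (\<Phi> a) (S a)" by (rule bchoice)
  then obtain S where PS0: "\<forall>a\<in>A. P a (\<Phi> a) (S a)" by (rule exE)
  have PS: "\<forall>a\<in>A. bij_betw (\<Phi> a) {x\<in>X. \<beta> x = a} (fst (R a)) \<and> (\<forall>x\<in>{x\<in>X. \<beta> x = a}. S a x \<noteq> 0) \<and>
       (\<forall>g\<in>G. \<forall>x\<in>{x\<in>X. \<beta> x = a}. \<forall>x'\<in>{x\<in>X. \<beta> x = a}.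
          snd (R a) g (\<Phi> a x') (\<Phi> a x) * S a x = S a x' * K g x' x)"
    using PS0 unfolding P_def .
  have finR: "\<forall>a\<in>A. finite (fst (R a))" using comp unfolding mono_iso_def by blast
  define \<phi> where "\<phi> = (\<lambda>x. (\<beta> x, \<Phi> (\<beta> x) x))"
  define s where "s = (\<lambda>x. S (\<beta> x) x)"
  have fst_d: "fst (dsum A R) = Sigma A (\<lambda>a. fst (R a))" unfolding dsum_def by simp
  have snd_d: "snd (dsum A R) g (a', y) (a, x) = (if a = a' then snd (R a) g y x else 0)" for g a a' x y
    unfolding dsum_def by simp
  have bijA: "bij_betw (\<Phi> a) {x\<in>X. \<beta> x = a} (fst (R a))" if "a \<in> A" for a
    using PS that by blast
  have bij: "bij_betw \<phi> X (Sigma A (\<lambda>a. fst (R a)))"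
  proof (rule bij_betw_imageI)
    show "inj_on \<phi> X"
    proof
      fix x x' assume xx: "x \<in> X" "x' \<in> X" "\<phi> x = \<phi> x'"
      then have e: "\<beta> x = \<beta> x'" "\<Phi> (\<beta> x) x = \<Phi> (\<beta> x) x'" unfolding \<phi>_def by auto
      have "inj_on (\<Phi> (\<beta> x)) {y\<in>X. \<beta> y = \<beta> x}" using bijA[of "\<beta> x"] beta xx
        unfolding bij_betw_def by blast
      then show "x = x'" using e xx by (auto dest: inj_onD)
    qed
    show "\<phi> ` X = Sigma A (\<lambda>a. fst (R a))"
    proof
      show "\<phi> ` X \<subseteq> Sigma A (\<lambda>a. fst (R a))"
      proof
        fix p assume "p \<in> \<phi> ` X"
        then obtain x where x: "x \<in> X" "p = \<phi> x" by blast
        have "\<Phi> (\<beta> x) x \<in> fst (R (\<beta> x))" using bijA[of "\<beta> x"] beta x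
          unfolding bij_betw_def by blast
        then show "p \<in> Sigma A (\<lambda>a. fst (R a))" using x beta unfolding \<phi>_def by auto
      qed
      show "Sigma A (\<lambda>a. fst (R a)) \<subseteq> \<phi> ` X"
      proof
        fix p assume "p \<in> Sigma A (\<lambda>a. fst (R a))"
        then obtain a y where p: "p = (a, y)" "a \<in> A" "y \<in> fst (R a)" by auto
        then have "y \<in> \<Phi> a ` {x\<in>X. \<beta> x = a}" using bijA[of a] unfolding bij_betw_def by blast
        then obtain x where "x \<in> X" "\<beta> x = a" "\<Phi> a x = y" by blast
        then show "p \<in> \<phi> ` X" unfolding \<phi>_def p by auto
      qed
    qed
  qed
  have nz: "\<forall>x\<in>X. s x \<noteq> 0" using PS beta unfolding s_def by auto
  have int: "\<forall>g\<in>G. \<forall>x\<in>X. \<forall>x'\<in>X. snd (dsum A R) g (\<phi> x') (\<phi> x) * s x = s x' * K g x' x"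
  proof (intro ballI)
    fix g x x' assume g: "g \<in> G" and x: "x \<in> X" and x': "x' \<in> X"
    show "snd (dsum A R) g (\<phi> x') (\<phi> x) * s x = s x' * K g x' x"
    proof (cases "\<beta> x = \<beta> x'")
      case True
      then show ?thesis using PS beta g x x' unfolding \<phi>_def s_def snd_d by auto
    next
      case False
      then show ?thesis using blk g x x' unfolding \<phi>_def s_def snd_d by auto
    qed
  qed
  show ?thesis unfolding mono_iso_def fst_d using finX finA finR bij nz int by auto
qed


lemma mono_ind:
  fixes mul :: "'g \<Rightarrow> 'g \<Rightarrow> 'g"
  assumes closed: "\<And>g h. g \<in> G \<Longrightarrow> h \<in> G \<Longrightarrow> mul g h \<in> G"
    and assoc: "\<And>g h k. g \<in> G \<Longrightarrow> h \<in> G \<Longrightarrow> k \<in> G \<Longrightarrow> mul (mul g h) k = mul g (mul h k)"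
    and eG: "e \<in> G" and el: "\<And>g. g \<in> G \<Longrightarrow> mul e g = g"
    and iG: "\<And>g. g \<in> G \<Longrightarrow> iv g \<in> G"
    and il: "\<And>g. g \<in> G \<Longrightarrow> mul (iv g) g = e"
    and ir: "\<And>g. g \<in> G \<Longrightarrow> mul g (iv g) = e"
    and finX: "finite X"
    and actX: "\<And>g x. g \<in> G \<Longrightarrow> x \<in> X \<Longrightarrow> act g x \<in> X"
    and act_mul: "\<And>g h x. g \<in> G \<Longrightarrow> h \<in> G \<Longrightarrow> x \<in> X \<Longrightarrow> act (mul g h) x = act g (act h x)"
    and act_e: "\<And>x. x \<in> X \<Longrightarrow> act e x = x"
    and coef_mul: "\<And>g h x. g \<in> G \<Longrightarrow> h \<in> G \<Longrightarrow> x \<in> X \<Longrightarrow> coef (mul g h) x = coef g (act h x) * coef h x"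
    and coef_nz: "\<And>g x. g \<in> G \<Longrightarrow> x \<in> X \<Longrightarrow> coef g x \<noteq> 0"
    and K: "\<And>g x x'. g \<in> G \<Longrightarrow> x \<in> X \<Longrightarrow> x' \<in> X \<Longrightarrow> K g x' x = (if x' = act g x then coef g x else 0)"
    and xz: "xz \<in> X" and trans: "\<And>x. x \<in> X \<Longrightarrow> \<exists>g\<in>G. act g xz = x"
    and H: "H = {g\<in>G. act g xz = xz}"
    and chi: "\<And>h. h \<in> H \<Longrightarrow> chi h = coef h xz"
  shows "mono_iso G (X, K) (ind_char mul G H chi)"
proof -
  define \<phi> where "\<phi> = (\<lambda>x. {g\<in>G. act g xz = x})"
  define r where "r = (\<lambda>c::'g set. SOME x. x \<in> c)"
  define s where "s = (\<lambda>x. 1 / coef (r (\<phi> x)) xz)"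
  have coset: "\<phi> x = (\<lambda>h. mul g0 h) ` H" if x: "x \<in> X" and g0: "g0 \<in> G" "act g0 xz = x" for x g0
  proof
    show "\<phi> x \<subseteq> (\<lambda>h. mul g0 h) ` H"
    proof
      fix g assume "g \<in> \<phi> x"
      then have g: "g \<in> G" "act g xz = x" unfolding \<phi>_def by auto
      define h where "h = mul (iv g0) g"
      have hG: "h \<in> G" unfolding h_def using closed iG g g0 by blast
      have "act h xz = act (iv g0) (act g0 xz)" unfolding h_def using act_mul iG g g0 xz by simp
      also have "\<dots> = xz" using act_mul[of "iv g0" g0 xz] iG[OF g0(1)] g0(1) xz il[OF g0(1)] act_e[OF xz] by simp
      finally have "h \<in> H" using H hG by simp
      moreover have "mul g0 h = g" unfolding h_def using assoc[symmetric] iG g g0 ir el by simp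
      ultimately show "g \<in> (\<lambda>h. mul g0 h) ` H" by blast
    qed
    show "(\<lambda>h. mul g0 h) ` H \<subseteq> \<phi> x"
    proof
      fix g assume "g \<in> (\<lambda>h. mul g0 h) ` H"
      then obtain h where h: "h \<in> G" "act h xz = xz" "g = mul g0 h" using H by blast
      then show "g \<in> \<phi> x" unfolding \<phi>_def using closed act_mul g0 xz by simp
    qed
  qed
  have r\<phi>: "r (\<phi> x) \<in> G \<and> act (r (\<phi> x)) xz = x" if xX: "x \<in> X" for x
  proof -
    obtain g where "g \<in> G" "act g xz = x" using trans[OF xX] by blast
    then have "g \<in> \<phi> x" unfolding \<phi>_def by simp
    then have "r (\<phi> x) \<in> \<phi> x" unfolding r_def by (rule someI)
    then show ?thesis unfolding \<phi>_def by simp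
  qed
  have fst_i: "fst (ind_char mul G H chi) = (\<lambda>g. (\<lambda>h. mul g h) ` H) ` G"
    unfolding ind_char_def by simp
  have img: "\<phi> ` X = (\<lambda>g. (\<lambda>h. mul g h) ` H) ` G"
  proof
    show "\<phi> ` X \<subseteq> (\<lambda>g. (\<lambda>h. mul g h) ` H) ` G"
      using coset r\<phi> by blast
    show "(\<lambda>g. (\<lambda>h. mul g h) ` H) ` G \<subseteq> \<phi> ` X"
    proof
      fix c assume "c \<in> (\<lambda>g. (\<lambda>h. mul g h) ` H) ` G"
      then obtain g where g: "g \<in> G" "c = (\<lambda>h. mul g h) ` H" by blast
      then have "c = \<phi> (act g xz)" using coset[of "act g xz" g] actX xz by simp
      then show "c \<in> \<phi> ` X" using actX g xz by blast
    qed
  qed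
  have inj: "inj_on \<phi> X"
  proof
    fix x x' assume "x \<in> X" "x' \<in> X" "\<phi> x = \<phi> x'"
    then show "x = x'" using r\<phi>[of x] r\<phi>[of x'] by metis
  qed
  have bij: "bij_betw \<phi> X (fst (ind_char mul G H chi))"
    unfolding bij_betw_def fst_i using inj img by simp
  have nz: "\<forall>x\<in>X. s x \<noteq> 0" unfolding s_def using r\<phi> coef_nz xz by simp
  have snd_i: "snd (ind_char mul G H chi) g c' c =
      (if \<exists>h\<in>H. mul g (r c) = mul (r c') h then chi (THE h. h \<in> H \<and> mul g (r c) = mul (r c') h) else 0)"
    for g c c' unfolding ind_char_def r_def Let_def by simp
  have int: "\<forall>g\<in>G. \<forall>x\<in>X. \<forall>x'\<in>X. snd (ind_char mul G H chi) g (\<phi> x') (\<phi> x) * s x = s x' * K g x' x"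
  proof (intro ballI)
    fix g x x' assume g: "g \<in> G" and x: "x \<in> X" and x': "x' \<in> X"
    define rc where "rc = r (\<phi> x)"
    define rc' where "rc' = r (\<phi> x')"
    have rc: "rc \<in> G" "act rc xz = x" unfolding rc_def using r\<phi>[OF x] by auto
    have rc': "rc' \<in> G" "act rc' xz = x'" unfolding rc'_def using r\<phi>[OF x'] by auto
    show "snd (ind_char mul G H chi) g (\<phi> x') (\<phi> x) * s x = s x' * K g x' x"
    proof (cases "x' = act g x")
      case True
      define h0 where "h0 = mul (iv rc') (mul g rc)"
      have h0G: "h0 \<in> G" unfolding h0_def using closed iG g rc rc' by blast
      have "act h0 xz = act (iv rc') (act rc' xz)"
        unfolding h0_def using act_mul closed iG g rc rc' xz True by simp
      also have "\<dots> = xz" using act_mul[of "iv rc'" rc' xz] iG[OF rc'(1)] rc'(1) xz il[OF rc'(1)] act_e[OF xz] by simp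
      finally have h0H: "h0 \<in> H" using H h0G by simp
      have eq0: "mul rc' h0 = mul g rc" unfolding h0_def
        using assoc[symmetric] iG g rc rc' ir el closed by simp
      have uniq: "h = h0" if "h \<in> H" "mul g rc = mul rc' h" for h
      proof -
        have hG: "h \<in> G" using that H by simp
        have "h = mul (mul (iv rc') rc') h" using il el rc' hG by simp
        also have "\<dots> = mul (iv rc') (mul rc' h)" using assoc iG rc' hG by simp
        also have "\<dots> = h0" unfolding h0_def using that by simp
        finally show ?thesis .
      qed
      have ex: "\<exists>h\<in>H. mul g rc = mul rc' h" using h0H eq0[symmetric] by (rule rev_bexI)
      have the: "(THE h. h \<in> H \<and> mul g rc = mul rc' h) = h0"
        apply (rule the_equality)
        using uniq h0H eq0[symmetric] by blast+
      have "coef (mul g rc) xz = coef g x * coef rc xz" using coef_mul g rc xz by simp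
      moreover have "coef (mul rc' h0) xz = coef rc' xz * coef h0 xz"
        using coef_mul rc' h0G xz h0H H by simp
      ultimately have ceq: "coef rc' xz * coef h0 xz = coef g x * coef rc xz" using eq0 by simp
      have n1: "coef rc xz \<noteq> 0" "coef rc' xz \<noteq> 0" using coef_nz rc rc' xz by auto
      have "snd (ind_char mul G H chi) g (\<phi> x') (\<phi> x) = coef h0 xz"
        unfolding snd_i using ex the chi h0H by (simp add: rc_def rc'_def)
      moreover have "K g x' x = coef g x" using K g x x' True by simp
      ultimately show ?thesis unfolding s_def using n1 ceq
        by (simp add: rc_def[symmetric] rc'_def[symmetric] field_simps)
    next
      case False
      have "\<not> (\<exists>h\<in>H. mul g rc = mul rc' h)"
      proof
        assume "\<exists>h\<in>H. mul g rc = mul rc' h"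
        then obtain h where h: "h \<in> G" "act h xz = xz" "mul g rc = mul rc' h" using H by blast
        have "act (mul g rc) xz = act g x" using act_mul g rc xz by simp
        moreover have "act (mul rc' h) xz = x'" using act_mul rc' h xz by simp
        ultimately show False using False h by simp
      qed
      then have "snd (ind_char mul G H chi) g (\<phi> x') (\<phi> x) = 0"
        unfolding snd_i by (simp add: rc_def rc'_def)
      moreover have "K g x' x = 0" using K g x x' False by simp
      ultimately show ?thesis by simp
    qed
  qed
  have finI: "finite (fst (ind_char mul G H chi))" using bij finX bij_betw_finite by blast
  show ?thesis unfolding mono_iso_def using finX finI bij nz int by auto
qed



definition cm :: "nat \<Rightarrow> cmat \<Rightarrow> nat multiset \<Rightarrow> complex" where
  "cm n g \<alpha> = prod_mset (image_mset (\<lambda>a. g (sg n g a) a) \<alpha>)"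

lemma prod_list_map_nth: "prod_list (map F xs) = (\<Prod>i<length xs. F (xs ! i))"
  by (induction xs) (simp_all add: prod.lessThan_Suc_shift del: prod.lessThan_Suc)

lemma symrep_K:
  assumes g: "g \<in> monomial_group n" and a: "set_mset \<alpha> \<subseteq> {..<n}" "size \<alpha> = k"
  shows "snd (symrep k (defrep n)) g \<beta> \<alpha> = (if \<beta> = image_mset (sg n g) \<alpha> then cm n g \<alpha> else 0)"
proof -
  define xs0 where "xs0 = (SOME xs. mset xs = \<alpha>)"
  have mx: "mset xs0 = \<alpha>" unfolding xs0_def using ex_mset by (rule someI_ex)
  have lx: "length xs0 = k" using mx a by (metis size_mset)
  have sx: "set xs0 \<subseteq> {..<n}" using mx a by (metis set_mset_mset)
  define y0 where "y0 = map (sg n g) xs0"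
  define S where "S = {ys. length ys = k \<and> mset ys = \<beta>}"
  have finS: "finite S"
  proof (rule finite_subset)
    show "S \<subseteq> {ys. set ys \<subseteq> set_mset \<beta> \<and> length ys = k}" unfolding S_def by auto
    show "finite {ys. set ys \<subseteq> set_mset \<beta> \<and> length ys = k}" by (rule finite_lists_length_eq) simp
  qed
  define c where "c = (\<Prod>i<k. g (y0 ! i) (xs0 ! i))"
  have tm: "(\<Prod>i<k. g (ys ! i) (xs0 ! i)) = (if ys = y0 then c else 0)" if ys: "ys \<in> S" for ys
  proof (cases "ys = y0")
    case True then show ?thesis unfolding c_def by simp
  next
    case False
    have "length ys = k" using ys unfolding S_def by simp
    then obtain i where i: "i < k" "ys ! i \<noteq> y0 ! i" using False lx unfolding y0_def
      by (metis length_map nth_equalityI)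
    have "g (ys ! i) (xs0 ! i) = 0"
      using sg_unique[OF g, of "ys ! i" "xs0 ! i"] i lx unfolding y0_def by auto
    then have "(\<Prod>i<k. g (ys ! i) (xs0 ! i)) = 0" using i by (intro prod_zero) auto
    then show ?thesis using False by simp
  qed
  have lhs: "snd (symrep k (defrep n)) g \<beta> \<alpha> = (\<Sum>ys\<in>S. \<Prod>i<k. g (ys ! i) (xs0 ! i))"
    unfolding symrep_def defrep_def S_def xs0_def Let_def by simp
  also have "\<dots> = (\<Sum>ys\<in>S. if ys = y0 then c else 0)" using tm by (rule sum.cong[OF refl])
  also have "\<dots> = (if y0 \<in> S then c else 0)" using finS by simp
  also have "\<dots> = (if \<beta> = image_mset (sg n g) \<alpha> then cm n g \<alpha> else 0)"
  proof -
    have "y0 \<in> S \<longleftrightarrow> \<beta> = image_mset (sg n g) \<alpha>" unfolding S_def y0_def using lx mx by auto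
    moreover have "c = cm n g \<alpha>"
    proof -
      have "c = prod_list (map (\<lambda>a. g (sg n g a) a) xs0)"
        unfolding c_def prod_list_map_nth y0_def using lx by simp
      also have "\<dots> = cm n g \<alpha>" unfolding cm_def using mx
        by (metis mset_map prod_mset_prod_list)
      finally show ?thesis .
    qed
    ultimately show ?thesis by simp
  qed
  finally show ?thesis .
qed


definition TX :: "nat \<Rightarrow> nat list \<Rightarrow> nat multiset list set" where
  "TX n ks = fst (tensor_list (map (\<lambda>k. symrep k (defrep n)) ks))"
definition TK :: "nat \<Rightarrow> nat list \<Rightarrow> cmat \<Rightarrow> nat multiset list \<Rightarrow> nat multiset list \<Rightarrow> complex" where
  "TK n ks = snd (tensor_list (map (\<lambda>k. symrep k (defrep n)) ks))"
definition actT :: "nat \<Rightarrow> cmat \<Rightarrow> nat multiset list \<Rightarrow> nat multiset list" where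
  "actT n g xs = map (image_mset (sg n g)) xs"
definition coefT :: "nat \<Rightarrow> cmat \<Rightarrow> nat multiset list \<Rightarrow> complex" where
  "coefT n g xs = (\<Prod>i<length xs. cm n g (xs ! i))"

lemma TX_eq: "TX n ks = {xs. length xs = length ks \<and> (\<forall>i<length ks. set_mset (xs ! i) \<subseteq> {..<n} \<and> size (xs ! i) = ks ! i)}"
  unfolding TX_def tensor_list_def symrep_def defrep_def by simp

lemma TK_eq: "TK n ks g ys xs = (\<Prod>i<length ks. snd (symrep (ks ! i) (defrep n)) g (ys ! i) (xs ! i))"
  unfolding TK_def tensor_list_def by simp

lemma TK_formula: assumes g: "g \<in> monomial_group n" and xs: "xs \<in> TX n ks" and ys: "ys \<in> TX n ks"
  shows "TK n ks g ys xs = (if ys = actT n g xs then coefT n g xs else 0)"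
proof -
  have lx: "length xs = length ks" and ly: "length ys = length ks"
    and sx: "\<And>i. i < length ks \<Longrightarrow> set_mset (xs ! i) \<subseteq> {..<n} \<and> size (xs ! i) = ks ! i"
    using xs ys unfolding TX_eq by auto
  have "TK n ks g ys xs = (\<Prod>i<length ks. if ys ! i = image_mset (sg n g) (xs ! i) then cm n g (xs ! i) else 0)"
    unfolding TK_eq using symrep_K[OF g] sx by (intro prod.cong) auto
  also have "\<dots> = (if ys = actT n g xs then coefT n g xs else 0)"
  proof (cases "ys = actT n g xs")
    case True
    then show ?thesis unfolding coefT_def actT_def using lx by simp
  next
    case False
    then obtain i where i: "i < length ks" "ys ! i \<noteq> image_mset (sg n g) (xs ! i)"
      unfolding actT_def using lx ly by (metis length_map nth_equalityI nth_map)
    then show ?thesis using False by (intro trans[OF prod_zero]) auto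
  qed
  finally show ?thesis .
qed

lemma actT_TX: assumes g: "g \<in> monomial_group n" and xs: "xs \<in> TX n ks"
  shows "actT n g xs \<in> TX n ks"
proof -
  have "set_mset (image_mset (sg n g) M) \<subseteq> {..<n}" if "set_mset M \<subseteq> {..<n}" for M
    using that sg_lt[OF g] by auto
  then show ?thesis using xs unfolding TX_eq actT_def by auto
qed

lemma prod_mset_image_mult:
  "prod_mset (image_mset (\<lambda>x. f x * g x) M) = prod_mset (image_mset f M) * (prod_mset (image_mset g M) :: 'a :: comm_monoid_mult)"
  by (induction M) (simp_all add: ac_simps)

lemma cm_mul: assumes g: "g \<in> monomial_group n" and h: "h \<in> monomial_group n" and M: "set_mset M \<subseteq> {..<n}"
  shows "cm n (mmul n g h) M = cm n g (image_mset (sg n h) M) * cm n h M"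
proof -
  have "cm n (mmul n g h) M = prod_mset (image_mset (\<lambda>a. g (sg n g (sg n h a)) (sg n h a) * h (sg n h a) a) M)"
    unfolding cm_def using mmul_entry[OF g h] M by (intro arg_cong[where f=prod_mset] image_mset_cong) auto
  also have "\<dots> = cm n g (image_mset (sg n h) M) * cm n h M"
    unfolding prod_mset_image_mult cm_def image_mset.compositionality by (simp add: comp_def)
  finally show ?thesis .
qed

lemma actT_mul: assumes g: "g \<in> monomial_group n" and h: "h \<in> monomial_group n" and xs: "xs \<in> TX n ks"
  shows "actT n (mmul n g h) xs = actT n g (actT n h xs)"
proof -
  have "image_mset (sg n (mmul n g h)) M = image_mset (sg n g) (image_mset (sg n h) M)"
    if "set_mset M \<subseteq> {..<n}" for M
    unfolding image_mset.compositionality using sg_mmul[OF g h] that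
    by (intro image_mset_cong) auto
  then show ?thesis using xs unfolding actT_def TX_eq
    by (intro nth_equalityI) auto
qed

lemma coefT_mul: assumes g: "g \<in> monomial_group n" and h: "h \<in> monomial_group n" and xs: "xs \<in> TX n ks"
  shows "coefT n (mmul n g h) xs = coefT n g (actT n h xs) * coefT n h xs"
proof -
  have "coefT n (mmul n g h) xs = (\<Prod>i<length xs. cm n g (image_mset (sg n h) (xs ! i)) * cm n h (xs ! i))"
    unfolding coefT_def using cm_mul[OF g h] xs unfolding TX_eq by (intro prod.cong) auto
  also have "\<dots> = coefT n g (actT n h xs) * coefT n h xs"
    unfolding coefT_def actT_def prod.distrib by simp
  finally show ?thesis .
qed

lemma actT_idm: assumes xs: "xs \<in> TX n ks" shows "actT n (idm n) xs = xs"
proof -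
  have "image_mset (sg n (idm n)) M = M" if "set_mset M \<subseteq> {..<n}" for M
    using sg_idm that by (metis (no_types, lifting) image_mset_cong image_mset.identity id_apply lessThan_iff subsetD)
  then show ?thesis using xs unfolding actT_def TX_eq by (intro nth_equalityI) auto
qed

lemma coefT_nz: assumes g: "g \<in> monomial_group n" and xs: "xs \<in> TX n ks"
  shows "coefT n g xs \<noteq> 0"
proof -
  have "cm n g M \<noteq> 0" if "set_mset M \<subseteq> {..<n}" for M
    unfolding cm_def using sg_nz[OF g] that by auto
  then show ?thesis unfolding coefT_def using xs unfolding TX_eq by auto
qed

lemma finite_TX: "finite (TX n ks)"
proof -
  define N where "N = sum_list ks"
  define S where "S = mset ` {l. set l \<subseteq> {..<n} \<and> length l \<le> N}"
  have finS: "finite S" unfolding S_def by (intro finite_imageI finite_lists_length_le) simp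
  have ks_le: "i < length ks \<Longrightarrow> ks ! i \<le> N" for i
    unfolding N_def by (simp add: elem_le_sum_list)
  have sub: "TX n ks \<subseteq> {xs. set xs \<subseteq> S \<and> length xs = length ks}"
  proof
    fix xs assume xs: "xs \<in> TX n ks"
    have "xs ! i \<in> S" if "i < length xs" for i
    proof -
      obtain l where l: "mset l = xs ! i" using ex_mset by blast
      have "set l \<subseteq> {..<n}" "length l \<le> N"
        using xs that l ks_le unfolding TX_eq by (auto simp flip: set_mset_mset size_mset)
      then show ?thesis unfolding S_def by (intro image_eqI[where x=l and f=mset]) (simp_all add: l)
    qed
    then show "xs \<in> {xs. set xs \<subseteq> S \<and> length xs = length ks}" using xs unfolding TX_eq
      by (auto simp: in_set_conv_nth)
  qed
  show ?thesis by (rule finite_subset[OF sub finite_lists_length_eq[OF finS]])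
qed



lemma sum_count_size: assumes "finite A" "set_mset M \<subseteq> A" shows "sum (count M) A = size M"
  using assms(2)
proof (induction M)
  case empty then show ?case by simp
next
  case (add x M)
  have "sum (count (add_mset x M)) A = sum (\<lambda>a. count M a + (if a = x then 1 else 0)) A"
    by (intro sum.cong) auto
  also have "\<dots> = sum (count M) A + 1" using add assms(1) by (simp add: sum.distrib)
  finally show ?case using add by simp
qed

lemma count_image_inj: assumes "inj_on f A" "set_mset M \<subseteq> A" "a \<in> A"
  shows "count (image_mset f M) (f a) = count M a"
proof -
  have "f -` {f a} \<inter> set_mset M = (if a \<in># M then {a} else {})"
    using assms by (auto dest: inj_onD)
  then show ?thesis unfolding count_image_mset by (auto simp: not_in_iff)
qed

lemma sum_fibers:
  fixes w :: "'b \<Rightarrow> 'c :: comm_semiring_1"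
  assumes "finite S" "finite T" "\<forall>a\<in>S. f a \<notin> T \<longrightarrow> w (f a) = 0"
  shows "(\<Sum>a\<in>S. w (f a)) = (\<Sum>t\<in>T. w t * of_nat (card {a\<in>S. f a = t}))"
proof -
  have "(\<Sum>t\<in>T. w t * of_nat (card {a\<in>S. f a = t})) = (\<Sum>t\<in>T. \<Sum>a\<in>S. if f a = t then w t else 0)"
  proof (intro sum.cong refl)
    fix t
    have "(\<Sum>a\<in>S. if f a = t then w t else 0) = (\<Sum>a\<in>{a\<in>S. f a = t}. w t)"
      using assms(1) by (rule sum.inter_filter[symmetric])
    also have "\<dots> = of_nat (card {a\<in>S. f a = t}) * w t" by simp
    finally show "w t * of_nat (card {a\<in>S. f a = t}) = (\<Sum>a\<in>S. if f a = t then w t else 0)"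
      by (simp add: mult.commute)
  qed
  also have "\<dots> = (\<Sum>a\<in>S. \<Sum>t\<in>T. if f a = t then w t else 0)" by (rule sum.swap)
  also have "\<dots> = (\<Sum>a\<in>S. w (f a))"
    using assms by (intro sum.cong refl) (auto simp: sum.delta')
  finally show ?thesis by simp
qed

definition fx :: "nat multiset list \<Rightarrow> nat \<Rightarrow> nat list" where
  "fx xs a = map (\<lambda>j. count (xs ! j) a) [0..<length xs]"

definition arr :: "nat \<Rightarrow> nat list \<Rightarrow> nat multiset list \<Rightarrow> nat list \<Rightarrow> nat" where
  "arr n ks xs = (\<lambda>is. if is \<in> arr_index ks then card {a\<in>{..<n}. fx xs a = is} else 0)"

lemma finite_arr_index: "finite (arr_index ks)"
proof (rule finite_subset)
  show "arr_index ks \<subseteq> {is. set is \<subseteq> {..sum_list ks} \<and> length is = length ks}"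
  proof
    fix x assume x: "x \<in> arr_index ks"
    have "set x \<subseteq> {..sum_list ks}"
    proof
      fix y assume y: "y \<in> set x"
      then obtain i where i: "i < length ks" "y = x ! i" using x unfolding arr_index_def by (auto simp: in_set_conv_nth)
      then have "y \<le> ks ! i" using x unfolding arr_index_def by auto
      also have "\<dots> \<le> sum_list ks" using i by (intro elem_le_sum_list)
      finally show "y \<in> {..sum_list ks}" by simp
    qed
    moreover have "length x = length ks" using x unfolding arr_index_def by simp
    ultimately show "x \<in> {is. set is \<subseteq> {..sum_list ks} \<and> length is = length ks}" by simp
  qed
  show "finite {is. set is \<subseteq> {..sum_list ks} \<and> length is = length ks}"
    by (rule finite_lists_length_eq) simp
qed

lemma fx_range: assumes xs: "xs \<in> TX n ks"
  shows "fx xs a \<in> arr_index ks \<or> fx xs a = replicate (length ks) 0"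
proof -
  have l: "length (fx xs a) = length ks" using xs unfolding fx_def TX_eq by simp
  have "j < length ks \<Longrightarrow> fx xs a ! j \<le> ks ! j" for j
    using xs unfolding fx_def TX_eq by (auto intro: order_trans[OF count_le_size])
  then show ?thesis using l unfolding arr_index_def by auto
qed

lemma fx_nth: "xs \<in> TX n ks \<Longrightarrow> j < length ks \<Longrightarrow> fx xs a ! j = count (xs ! j) a"
  unfolding fx_def TX_eq by simp

lemma fx_len: "xs \<in> TX n ks \<Longrightarrow> length (fx xs a) = length ks"
  unfolding fx_def TX_eq by simp

lemma arr_arrays: assumes xs: "xs \<in> TX n ks" shows "arr n ks xs \<in> arrays n ks"
proof -
  let ?AI = "arr_index ks"
  have finAI: "finite ?AI" by (rule finite_arr_index)
  have v: "\<forall>is. is \<notin> ?AI \<longrightarrow> arr n ks xs is = 0" unfolding arr_def by simp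
  have s: "(\<Sum>is\<in>?AI. is ! j * arr n ks xs is) = ks ! j" if j: "j < length ks" for j
  proof -
    have "(\<Sum>is\<in>?AI. is ! j * arr n ks xs is) = (\<Sum>is\<in>?AI. is ! j * card {a\<in>{..<n}. fx xs a = is})"
      unfolding arr_def by simp
    also have "\<dots> = (\<Sum>a\<in>{..<n}. fx xs a ! j)"
    proof -
      have "\<forall>a\<in>{..<n}. fx xs a \<notin> ?AI \<longrightarrow> fx xs a ! j = 0" using fx_range[OF xs] j by (metis nth_replicate)
      from sum_fibers[OF _ finAI this] show ?thesis by simp
    qed
    also have "\<dots> = (\<Sum>a\<in>{..<n}. count (xs ! j) a)" using fx_nth[OF xs j] by simp
    also have "\<dots> = size (xs ! j)" using xs j unfolding TX_eq by (intro sum_count_size) auto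
    also have "\<dots> = ks ! j" using xs j unfolding TX_eq by auto
    finally show ?thesis .
  qed
  have t: "(\<Sum>is\<in>?AI. arr n ks xs is) \<le> n"
  proof -
    define S where "S = {a\<in>{..<n}. fx xs a \<in> ?AI}"
    have "(\<Sum>is\<in>?AI. arr n ks xs is) = (\<Sum>is\<in>?AI. 1 * card {a\<in>S. fx xs a = is})"
      unfolding arr_def S_def by (intro sum.cong refl) (auto intro: arg_cong[where f=card])
    also have "\<dots> = (\<Sum>a\<in>S. 1)"
      using sum_fibers[of S ?AI "fx xs" "\<lambda>_. 1::nat"] finAI unfolding S_def by auto
    also have "\<dots> = card S" by simp
    also have "\<dots> \<le> n" unfolding S_def by (rule order_trans[OF card_mono[of "{..<n}"]]) auto
    finally show ?thesis .
  qed
  show ?thesis unfolding arrays_def using v s t by blast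
qed

lemma fx_act: assumes g: "g \<in> monomial_group n" and xs: "xs \<in> TX n ks" and a: "a < n"
  shows "fx (actT n g xs) (sg n g a) = fx xs a"
proof -
  have "count (image_mset (sg n g) (xs ! j)) (sg n g a) = count (xs ! j) a" if "j < length ks" for j
    using count_image_inj[OF sg_inj[OF g]] xs a that unfolding TX_eq by auto
  then show ?thesis unfolding fx_def actT_def using xs unfolding TX_eq by auto
qed

lemma arr_act: assumes g: "g \<in> monomial_group n" and xs: "xs \<in> TX n ks"
  shows "arr n ks (actT n g xs) = arr n ks xs"
proof -
  have "card {a\<in>{..<n}. fx (actT n g xs) a = v} = card {a\<in>{..<n}. fx xs a = v}" for v
  proof -
    have "{a\<in>{..<n}. fx (actT n g xs) a = v} = sg n g ` {a\<in>{..<n}. fx xs a = v}"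
    proof
      show "{a\<in>{..<n}. fx (actT n g xs) a = v} \<subseteq> sg n g ` {a\<in>{..<n}. fx xs a = v}"
      proof
        fix b assume b: "b \<in> {a\<in>{..<n}. fx (actT n g xs) a = v}"
        then obtain a where a: "a < n" "b = sg n g a" using sg_image[OF g] by (metis (no_types, lifting) imageE lessThan_iff mem_Collect_eq)
        then show "b \<in> sg n g ` {a\<in>{..<n}. fx xs a = v}" using b fx_act[OF g xs a(1)] by auto
      qed
      show "sg n g ` {a\<in>{..<n}. fx xs a = v} \<subseteq> {a\<in>{..<n}. fx (actT n g xs) a = v}"
        using fx_act[OF g xs] sg_lt[OF g] by auto
    qed
    also have "card \<dots> = card {a\<in>{..<n}. fx xs a = v}"
      by (rule card_image) (rule inj_on_subset[OF sg_inj[OF g]], auto)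
    finally show ?thesis .
  qed
  then show ?thesis unfolding arr_def by (intro ext) (simp only:)
qed

lemma finite_arrays: "finite (arrays n ks)"
proof (rule finite_subset)
  show "arrays n ks \<subseteq> {f. \<forall>x. (x \<in> arr_index ks \<longrightarrow> f x \<in> {..n}) \<and> (x \<notin> arr_index ks \<longrightarrow> f x = 0)}"
  proof
    fix B assume B: "B \<in> arrays n ks"
    have le: "B x \<le> n" if x: "x \<in> arr_index ks" for x
    proof -
      have "B x \<le> (\<Sum>is\<in>arr_index ks. B is)" using x finite_arr_index by (intro member_le_sum) auto
      then show ?thesis using B unfolding arrays_def by auto
    qed
    have z: "x \<notin> arr_index ks \<Longrightarrow> B x = 0" for x using B unfolding arrays_def by auto
    show "B \<in> {f. \<forall>x. (x \<in> arr_index ks \<longrightarrow> f x \<in> {..n}) \<and> (x \<notin> arr_index ks \<longrightarrow> f x = 0)}"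
      using le z by auto
  qed
  show "finite {f. \<forall>x. (x \<in> arr_index ks \<longrightarrow> f x \<in> {..n}) \<and> (x \<notin> arr_index ks \<longrightarrow> f x = (0::nat))}"
    by (rule finite_set_of_finite_funs) (auto simp: finite_arr_index)
qed



lemma fiber_bij:
  fixes F F' :: "nat \<Rightarrow> 'v"
  assumes eq: "\<And>v. card {a\<in>{..<n}. F a = v} = card {a\<in>{..<n}. F' a = v}"
  shows "\<exists>\<pi>. bij_betw \<pi> {..<n} {..<n} \<and> (\<forall>a<n. F' (\<pi> a) = F a)"
proof -
  define fb where "fb = (\<lambda>H v. {a\<in>{..<n}. (H :: nat \<Rightarrow> 'v) a = v})"
  have ex: "\<exists>h. bij_betw h (fb F v) (fb F' v)" for v
    unfolding fb_def by (rule finite_same_card_bij) (simp_all only: eq, auto)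
  define bv where "bv = (\<lambda>v. SOME h. bij_betw h (fb F v) (fb F' v))"
  have bv: "bij_betw (bv v) (fb F v) (fb F' v)" for v
    unfolding bv_def using ex by (rule someI_ex)
  define \<pi> where "\<pi> = (\<lambda>a. bv (F a) a)"
  have p1: "\<pi> a < n \<and> F' (\<pi> a) = F a" if "a < n" for a
  proof -
    have "a \<in> fb F (F a)" unfolding fb_def using that by simp
    then have "\<pi> a \<in> fb F' (F a)" unfolding \<pi>_def using bv[of "F a"] bij_betwE by blast
    then show ?thesis unfolding fb_def by simp
  qed
  have inj: "inj_on \<pi> {..<n}"
  proof
    fix a a' assume a: "a \<in> {..<n}" "a' \<in> {..<n}" "\<pi> a = \<pi> a'"
    then have "F a = F a'" using p1 by (metis lessThan_iff)
    moreover have "a \<in> fb F (F a)" "a' \<in> fb F (F a)" unfolding fb_def using a \<open>F a = F a'\<close> by auto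
    ultimately show "a = a'" using a(3) bv[of "F a"] unfolding \<pi>_def bij_betw_def by (metis inj_onD)
  qed
  have "\<pi> ` {..<n} = {..<n}" by (rule endo_inj_surj) (use p1 inj in auto)
  then have "bij_betw \<pi> {..<n} {..<n}" using inj by (simp add: bij_betw_def)
  then show ?thesis using p1 by blast
qed

definition pm :: "nat \<Rightarrow> (nat \<Rightarrow> nat) \<Rightarrow> cmat" where
  "pm n \<pi> = (\<lambda>i j. if j < n \<and> i = \<pi> j then 1 else 0)"

lemma pm_mg: assumes "bij_betw \<pi> {..<n} {..<n}" shows "pm n \<pi> \<in> monomial_group n"
proof -
  have lt: "j < n \<Longrightarrow> \<pi> j < n" for j using assms bij_betwE by blast
  have out: "\<forall>i j. (n \<le> i \<or> n \<le> j) \<longrightarrow> pm n \<pi> i j = 0" unfolding pm_def using lt by (auto simp: not_less[symmetric])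
  have col: "\<forall>j<n. \<exists>!i. i < n \<and> pm n \<pi> i j \<noteq> 0" unfolding pm_def using lt by auto
  have row: "\<forall>i<n. \<exists>!j. j < n \<and> pm n \<pi> i j \<noteq> 0"
  proof (intro allI impI)
    fix i assume "i < n"
    then obtain j where j: "j < n" "\<pi> j = i" using assms unfolding bij_betw_def by (metis imageE lessThan_iff)
    show "\<exists>!j. j < n \<and> pm n \<pi> i j \<noteq> 0"
      apply (rule ex1I[of _ j])
      using j assms unfolding pm_def bij_betw_def by (auto split: if_splits dest: inj_onD)
  qed
  show ?thesis unfolding monomial_group_def using out col row by (intro CollectI conjI)
qed

lemma sg_pm: assumes "bij_betw \<pi> {..<n} {..<n}" "a < n" shows "sg n (pm n \<pi>) a = \<pi> a"
  by (rule sg_unique[OF pm_mg[OF assms(1)]]) (simp add: pm_def assms(2))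

lemma card_AI: assumes xs: "xs \<in> TX n ks"
  shows "card {a\<in>{..<n}. fx xs a \<in> arr_index ks} = (\<Sum>t\<in>arr_index ks. arr n ks xs t)"
proof -
  define S where "S = {a\<in>{..<n}. fx xs a \<in> arr_index ks}"
  have "(\<Sum>t\<in>arr_index ks. arr n ks xs t) = (\<Sum>t\<in>arr_index ks. 1 * card {a\<in>S. fx xs a = t})"
    unfolding arr_def S_def by (intro sum.cong refl) (auto intro: arg_cong[where f=card])
  also have "\<dots> = (\<Sum>a\<in>S. 1)"
    using sum_fibers[of S "arr_index ks" "fx xs" "\<lambda>_. 1::nat"] finite_arr_index unfolding S_def by auto
  finally show ?thesis unfolding S_def by simp
qed

lemma fibers_eq: assumes xs: "xs \<in> TX n ks" and ys: "ys \<in> TX n ks" and eq: "arr n ks xs = arr n ks ys"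
  shows "card {a\<in>{..<n}. fx xs a = v} = card {a\<in>{..<n}. fx ys a = v}"
proof -
  let ?z = "replicate (length ks) 0"
  have zAI: "?z \<notin> arr_index ks" unfolding arr_index_def by simp
  show ?thesis
  proof (cases "v \<in> arr_index ks")
    case True
    then show ?thesis using fun_cong[OF eq, of v] unfolding arr_def by simp
  next
    case False
    show ?thesis
    proof (cases "v = ?z")
      case True
      have c: "card {a\<in>{..<n}. fx zs a = ?z} = n - card {a\<in>{..<n}. fx zs a \<in> arr_index ks}"
        if zs: "zs \<in> TX n ks" for zs
      proof -
        have "{a\<in>{..<n}. fx zs a = ?z} = {..<n} - {a\<in>{..<n}. fx zs a \<in> arr_index ks}"
          using fx_range[OF zs] zAI by auto
        moreover have "card ({..<n} - {a\<in>{..<n}. fx zs a \<in> arr_index ks}) = n - card {a\<in>{..<n}. fx zs a \<in> arr_index ks}"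
          by (subst card_Diff_subset) auto
        ultimately show ?thesis by simp
      qed
      show ?thesis using c[OF xs] c[OF ys] card_AI[OF xs] card_AI[OF ys] eq True by simp
    next
      case False
      then have "{a\<in>{..<n}. fx zs a = v} = {}" if "zs \<in> TX n ks" for zs
        using fx_range[OF that] \<open>v \<notin> arr_index ks\<close> by auto
      from this[OF xs] this[OF ys] show ?thesis by (simp only:)
    qed
  qed
qed

lemma orbit_trans: assumes xs: "xs \<in> TX n ks" and ys: "ys \<in> TX n ks" and eq: "arr n ks xs = arr n ks ys"
  shows "\<exists>g\<in>monomial_group n. actT n g xs = ys"
proof -
  obtain \<pi> where bij: "bij_betw \<pi> {..<n} {..<n}" and p: "\<forall>a<n. fx ys (\<pi> a) = fx xs a"
    using fiber_bij[of n "fx xs" "fx ys"] fibers_eq[OF xs ys eq] by blast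
  have inj: "inj_on \<pi> {..<n}" and img: "\<pi> ` {..<n} = {..<n}" using bij unfolding bij_betw_def by auto
  have lx: "length xs = length ks" and ly: "length ys = length ks"
    using xs ys unfolding TX_eq by auto
  have "image_mset (sg n (pm n \<pi>)) (xs ! j) = ys ! j" if j: "j < length ks" for j
  proof -
    have sx: "set_mset (xs ! j) \<subseteq> {..<n}" and sy: "set_mset (ys ! j) \<subseteq> {..<n}"
      using xs ys j unfolding TX_eq by auto
    have "image_mset (sg n (pm n \<pi>)) (xs ! j) = image_mset \<pi> (xs ! j)"
      using sg_pm[OF bij] sx by (intro image_mset_cong) auto
    also have "\<dots> = ys ! j"
    proof (rule multiset_eqI)
      fix b
      show "count (image_mset \<pi> (xs ! j)) b = count (ys ! j) b"
      proof (cases "b < n")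
        case True
        then obtain a where a: "a < n" "b = \<pi> a" using img by (metis imageE lessThan_iff)
        have "count (image_mset \<pi> (xs ! j)) b = count (xs ! j) a"
          using count_image_inj[OF inj sx] a by simp
        also have "\<dots> = fx xs a ! j" using fx_nth[OF xs j] by simp
        also have "\<dots> = fx ys b ! j" using p a by simp
        also have "\<dots> = count (ys ! j) b" using fx_nth[OF ys j] by simp
        finally show ?thesis .
      next
        case False
        have "b \<notin># image_mset \<pi> (xs ! j)" using sx img False by auto
        moreover have "b \<notin># ys ! j" using sy False by auto
        ultimately show ?thesis by (metis count_eq_zero_iff)
      qed
    qed
    finally show ?thesis .
  qed
  then have "actT n (pm n \<pi>) xs = ys" unfolding actT_def using lx ly by (intro nth_equalityI) auto
  then show ?thesis using pm_mg[OF bij] by blast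
qed



lemma st_mono: "b \<le> b' \<Longrightarrow> sum_list (take b nu) \<le> sum_list (take b' (nu :: nat list))"
proof -
  assume "b \<le> b'"
  then have "take b' nu = take b nu @ take (b' - b) (drop b nu)" by (metis le_add_diff_inverse take_add)
  then show ?thesis by simp
qed

lemma card_block: "b < length nu \<Longrightarrow> card (block nu b) = nu ! b"
  unfolding block_def by (simp add: take_Suc_conv_app_nth)

lemma block_sub: "b < length nu \<Longrightarrow> block nu b \<subseteq> {..<sum_list nu}"
  unfolding block_def using st_mono[of "Suc b" "length nu" nu] by auto

lemma block_uniq: assumes "a \<in> block nu b" "a \<in> block nu b'" shows "b = b'"
proof (rule ccontr)
  assume "b \<noteq> b'"
  then consider "Suc b \<le> b'" | "Suc b' \<le> b" by linarith
  then show False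
  proof cases
    case 1 then show False using assms st_mono[OF 1, of nu] unfolding block_def by auto
  next
    case 2 then show False using assms st_mono[OF 2, of nu] unfolding block_def by auto
  qed
qed

lemma block_Cons0: "block (x # nu) 0 = {0..<x}"
  unfolding block_def by simp
lemma block_Cons: "block (x # nu) (Suc b) = (\<lambda>a. x + a) ` block nu b"
  unfolding block_def by (simp add: add.commute)

lemma block_ex: "a < sum_list nu \<Longrightarrow> \<exists>b<length nu. a \<in> block nu b"
proof (induction nu arbitrary: a)
  case Nil then show ?case by simp
next
  case (Cons x nu)
  show ?case
  proof (cases "a < x")
    case True then show ?thesis using block_Cons0[of x nu] by (intro exI[of _ 0]) auto
  next
    case False
    then have "a - x < sum_list nu" using Cons.prems by simp
    then obtain b where "b < length nu" "a - x \<in> block nu b" using Cons.IH by blast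
    then show ?thesis using False block_Cons[of x nu b]
      by (intro exI[of _ "Suc b"]) (auto intro!: image_eqI[of _ _ "a - x"])
  qed
qed

definition bk :: "nat list \<Rightarrow> nat \<Rightarrow> nat" where
  "bk nu a = (THE b. b < length nu \<and> a \<in> block nu b)"

lemma bk_props: assumes "a < sum_list nu" shows "bk nu a < length nu \<and> a \<in> block nu (bk nu a)"
proof -
  obtain b where b: "b < length nu" "a \<in> block nu b" using block_ex[OF assms] by blast
  have "bk nu a = b" unfolding bk_def
    apply (rule the_equality)
    using b apply simp
    using b(2) block_uniq by metis
  then show ?thesis using b by simp
qed

lemma bk_eq: "a \<in> block nu b \<Longrightarrow> b < length nu \<Longrightarrow> bk nu a = b"
  unfolding bk_def apply (rule the_equality)
   apply simp
  using block_uniq by metis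

lemma block_eq_bk: assumes "b < length nu" shows "block nu b = {a\<in>{..<sum_list nu}. bk nu a = b}"
proof
  show "block nu b \<subseteq> {a\<in>{..<sum_list nu}. bk nu a = b}" using assms bk_eq block_sub by blast
  show "{a\<in>{..<sum_list nu}. bk nu a = b} \<subseteq> block nu b"
  proof
    fix a assume "a \<in> {a\<in>{..<sum_list nu}. bk nu a = b}"
    then show "a \<in> block nu b" using bk_props[of a nu] by auto
  qed
qed

lemma blocks_union: "(\<Union>b<length nu. block nu b) = {..<sum_list nu}"
proof
  show "(\<Union>b<length nu. block nu b) \<subseteq> {..<sum_list nu}" using block_sub by blast
  show "{..<sum_list nu} \<subseteq> (\<Union>b<length nu. block nu b)" using block_ex by (auto simp: lessThan_iff)
qed



declare upt_Suc[simp del]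

lemma sum_list_concat: "sum_list (concat xss) = sum_list (map sum_list (xss :: nat list list))"
  by (induction xss) simp_all

lemma mset_map_obtain: "mset ys = image_mset f M \<Longrightarrow> \<exists>zs. mset zs = M \<and> map f zs = ys"
proof (induction ys arbitrary: M)
  case Nil then show ?case by simp
next
  case (Cons y ys)
  have "y \<in># image_mset f M" using Cons.prems by (metis list.set_intros(1) set_mset_mset)
  then obtain z where z: "z \<in># M" "f z = y" by auto
  have "image_mset f (M - {#z#}) = image_mset f M - {#y#}"
    using z by (simp add: image_mset_Diff)
  also have "\<dots> = mset ys" using Cons.prems by (metis add_mset_remove_trivial mset.simps(2))
  finally obtain zs where "mset zs = M - {#z#}" "map f zs = ys" using Cons.IH by metis
  then show ?case using z by (intro exI[of _ "z # zs"]) simp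
qed

lemma lam_list: "\<exists>L. distinct L \<and> set L = {v\<in>arr_index ks. sum_list v = l \<and> B v \<noteq> 0} \<and> map B L = lam_part ks B l"
proof -
  define S where "S = {v\<in>arr_index ks. sum_list v = l \<and> B v \<noteq> 0}"
  have finS: "finite S" unfolding S_def using finite_arr_index by simp
  have "mset (lam_part ks B l) = image_mset B (mset_set S)"
    unfolding lam_part_def S_def using finite_arr_index by simp
  then obtain zs where zs: "mset zs = mset_set S" "map B zs = lam_part ks B l"
    using mset_map_obtain by metis
  have "set zs = S" using zs(1) finS by (metis finite_set_mset_mset_set set_mset_mset)
  moreover have "distinct zs" unfolding distinct_count_atmost_1 using zs(1) finS \<open>set zs = S\<close>
    by (metis count_mset_set(1) count_mset_set(3))
  ultimately show ?thesis using zs(2) unfolding S_def by blast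
qed

lemma distinct_concat_sums:
  assumes "distinct ls" "\<And>l. distinct (Lf l)" "\<And>l v. v \<in> set (Lf l) \<Longrightarrow> sum_list v = (l::nat)"
  shows "distinct (concat (map Lf ls))"
  using assms(1)
proof (induction ls)
  case Nil then show ?case by simp
next
  case (Cons l ls)
  have "set (Lf l) \<inter> set (concat (map Lf ls)) = {}"
  proof (rule ccontr)
    assume "set (Lf l) \<inter> set (concat (map Lf ls)) \<noteq> {}"
    then obtain v l' where "v \<in> set (Lf l)" "l' \<in> set ls" "v \<in> set (Lf l')" by auto
    then have "l = l'" using assms(3) by metis
    then show False using Cons.prems \<open>l' \<in> set ls\<close> by simp
  qed
  then show ?case using Cons assms(2) by simp
qed

lemma AI_sum: assumes "v \<in> arr_index ks" shows "1 \<le> sum_list v \<and> sum_list v \<le> sum_list ks"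
proof
  have l: "length v = length ks" using assms unfolding arr_index_def by simp
  show "1 \<le> sum_list v"
  proof (rule ccontr)
    assume "\<not> 1 \<le> sum_list v"
    then have "sum_list v = 0" by linarith
    then have "\<forall>x\<in>set v. x = 0" using sum_list_eq_0_iff by blast
    then have "v = replicate (length ks) 0" using l replicate_length_same by metis
    then show False using assms unfolding arr_index_def by simp
  qed
  have "sum_list v = (\<Sum>j<length ks. v ! j)" using l by (simp add: sum_list_sum_nth atLeast0LessThan)
  also have "\<dots> \<le> (\<Sum>j<length ks. ks ! j)" using assms unfolding arr_index_def by (intro sum_mono) auto
  also have "\<dots> = sum_list ks" by (simp add: sum_list_sum_nth atLeast0LessThan)
  finally show "sum_list v \<le> sum_list ks" .
qed

lemma vs_exists:
  assumes B: "B \<in> arrays n ks"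
  defines "lams \<equiv> map (lam_part ks B) [1..<Suc (sum_list ks)]"
  defines "m0 \<equiv> sum_list (map sum_list lams)"
  defines "nu \<equiv> (if n - m0 = 0 then [] else [n - m0]) @ concat lams"
  defines "w \<equiv> (if n - m0 = 0 then [] else [0]) @
           concat (map (\<lambda>(i, lam). replicate (length lam) (int i)) (zip [1..<Suc (length lams)] lams))"
  shows "\<exists>vs. length vs = length nu \<and> distinct vs \<and>
     nu = map (\<lambda>v. if v \<in> arr_index ks then B v else n - m0) vs \<and>
     w = map (\<lambda>v. int (sum_list v)) vs \<and>
     (\<forall>v\<in>set vs. v \<in> arr_index ks \<or> v = replicate (length ks) 0) \<and>
     {v\<in>arr_index ks. B v \<noteq> 0} \<subseteq> set vs \<and> sum_list nu = n"
proof -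
  let ?AI = "arr_index ks"
  let ?K = "sum_list ks"
  let ?z = "replicate (length ks) 0"
  have "\<forall>l. \<exists>L. distinct L \<and> set L = {v\<in>?AI. sum_list v = l \<and> B v \<noteq> 0} \<and> map B L = lam_part ks B l"
    using lam_list by blast
  then obtain Lf where Lf: "\<And>l. distinct (Lf l) \<and> set (Lf l) = {v\<in>?AI. sum_list v = l \<and> B v \<noteq> 0} \<and> map B (Lf l) = lam_part ks B l"
    by metis
  define Vs where "Vs = concat (map Lf [1..<Suc ?K])"
  have mapB: "map B Vs = concat lams" unfolding Vs_def lams_def map_concat map_map
    by (intro arg_cong[where f=concat] map_cong refl) (simp add: Lf)
  have dVs: "distinct Vs" unfolding Vs_def using Lf by (intro distinct_concat_sums) auto
  have sVs: "set Vs = {v\<in>?AI. B v \<noteq> 0}"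
  proof
    show "set Vs \<subseteq> {v\<in>?AI. B v \<noteq> 0}" unfolding Vs_def using Lf by auto
    show "{v\<in>?AI. B v \<noteq> 0} \<subseteq> set Vs"
    proof
      fix v assume v: "v \<in> {v\<in>?AI. B v \<noteq> 0}"
      then have "sum_list v \<in> set [1..<Suc ?K]" using AI_sum[of v ks] by auto
      moreover have "v \<in> set (Lf (sum_list v))" using Lf v by auto
      ultimately show "v \<in> set Vs" unfolding Vs_def by auto
    qed
  qed
  have zVs: "?z \<notin> set Vs" using sVs unfolding arr_index_def by auto
  have lenlams: "length lams = ?K" unfolding lams_def length_map length_upt by (simp del: upt_Suc)
  have wtail: "concat (map (\<lambda>(i, lam). replicate (length lam) (int i)) (zip [1..<Suc (length lams)] lams))
      = map (\<lambda>v. int (sum_list v)) Vs"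
  proof -
    have "zip [1..<Suc (length lams)] lams = map (\<lambda>i. (i, lam_part ks B i)) [1..<Suc ?K]"
      unfolding lenlams unfolding lams_def zip_map2 zip_same_conv_map by simp
    then have "concat (map (\<lambda>(i, lam). replicate (length lam) (int i)) (zip [1..<Suc (length lams)] lams))
        = concat (map (\<lambda>i. replicate (length (lam_part ks B i)) (int i)) [1..<Suc ?K])" by (simp add: comp_def)
    also have "\<dots> = concat (map (\<lambda>i. map (\<lambda>v. int (sum_list v)) (Lf i)) [1..<Suc ?K])"
    proof (intro arg_cong[where f=concat] map_cong refl)
      fix i
      have "map (\<lambda>v. int (sum_list v)) (Lf i) = map (\<lambda>v. int i) (Lf i)" using Lf by auto
      also have "\<dots> = replicate (length (Lf i)) (int i)" by (rule map_replicate_const)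
      also have "length (Lf i) = length (lam_part ks B i)" using Lf[of i] by (metis length_map)
      finally show "replicate (length (lam_part ks B i)) (int i) = map (\<lambda>v. int (sum_list v)) (Lf i)" by simp
    qed
    also have "\<dots> = map (\<lambda>v. int (sum_list v)) Vs" unfolding Vs_def map_concat by (simp add: comp_def)
    finally show ?thesis .
  qed
  have m0eq: "m0 = (\<Sum>v\<in>?AI. B v)"
  proof -
    have "m0 = sum_list (map B Vs)" unfolding m0_def mapB by (simp add: sum_list_concat)
    also have "\<dots> = (\<Sum>v\<in>set Vs. B v)" using dVs by (simp add: sum_list_distinct_conv_sum_set)
    also have "\<dots> = (\<Sum>v\<in>?AI. B v)" unfolding sVs
      by (rule sum.mono_neutral_left) (auto simp: finite_arr_index)
    finally show ?thesis .
  qed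
  have m0n: "m0 \<le> n" using B unfolding arrays_def m0eq by simp
  define vs where "vs = (if n - m0 = 0 then [] else [?z]) @ Vs"
  have "length vs = length nu" unfolding vs_def nu_def using mapB[symmetric] by simp
  moreover have "distinct vs" unfolding vs_def using dVs zVs by simp
  moreover have "nu = map (\<lambda>v. if v \<in> ?AI then B v else n - m0) vs"
  proof -
    have "map (\<lambda>v. if v \<in> ?AI then B v else n - m0) Vs = map B Vs" using sVs by simp
    moreover have "?z \<notin> ?AI" unfolding arr_index_def by simp
    ultimately show ?thesis unfolding vs_def nu_def mapB by simp
  qed
  moreover have "w = map (\<lambda>v. int (sum_list v)) vs" unfolding w_def vs_def wtail by simp
  moreover have "\<forall>v\<in>set vs. v \<in> ?AI \<or> v = ?z" unfolding vs_def using sVs by auto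
  moreover have "{v\<in>?AI. B v \<noteq> 0} \<subseteq> set vs" unfolding vs_def using sVs by auto
  moreover have "sum_list nu = n"
  proof -
    have "sum_list (concat lams) = m0" unfolding m0_def by (simp add: sum_list_concat)
    then show ?thesis unfolding nu_def using m0n by auto
  qed
  ultimately show ?thesis by blast
qed



lemma prod_mset_image_count:
  assumes "finite A" "set_mset M \<subseteq> A"
  shows "prod_mset (image_mset f M) = (\<Prod>a\<in>A. f a ^ count M a)"
  using assms(2)
proof (induction M)
  case empty then show ?case by simp
next
  case (add x M)
  have xA: "x \<in> A" using add.prems by simp
  have "(\<Prod>a\<in>A. f a ^ count (add_mset x M) a) = (\<Prod>a\<in>A. f a ^ count M a * (if a = x then f a else 1))"
    by (intro prod.cong refl) (auto simp: mult.commute)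
  also have "\<dots> = (\<Prod>a\<in>A. f a ^ count M a) * f x"
    unfolding prod.distrib using assms(1) xA by (simp add: prod.delta)
  finally show ?case using add by (simp add: mult.commute)
qed

lemma fx_inj: assumes xs: "xs \<in> TX n ks" and ys: "ys \<in> TX n ks" and eq: "\<forall>b<n. fx xs b = fx ys b"
  shows "xs = ys"
proof -
  have l: "length xs = length ks" "length ys = length ks" using xs ys unfolding TX_eq by auto
  have "xs ! j = ys ! j" if j: "j < length ks" for j
  proof (rule multiset_eqI)
    fix c show "count (xs ! j) c = count (ys ! j) c"
    proof (cases "c < n")
      case True then show ?thesis using fx_nth[OF xs j, of c] fx_nth[OF ys j, of c] eq by simp
    next
      case False
      have "c \<notin># xs ! j" "c \<notin># ys ! j" using xs ys j False unfolding TX_eq by auto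
      then show ?thesis by (metis count_eq_zero_iff)
    qed
  qed
  then show ?thesis using l by (intro nth_equalityI) auto
qed

lemma colent_eq: assumes h: "h \<in> monomial_group n" and j: "j < n"
  shows "colent n h j = h (sg n h j) j"
proof -
  have "colent n h j = (\<Sum>i<n. if i = sg n h j then h (sg n h j) j else 0)"
    unfolding colent_def using sg_unique[OF h, of _ j] by (intro sum.cong refl) (metis)
  also have "\<dots> = h (sg n h j) j" using sg_lt[OF h j] by simp
  finally show ?thesis .
qed

lemma base_point:
  assumes B: "B \<in> arrays n ks"
    and len: "length vs = length nu" and dist: "distinct vs"
    and nu: "nu = map cnt vs" and cnt: "\<And>v. v \<in> arr_index ks \<Longrightarrow> cnt v = B v"
    and w: "w = map (\<lambda>v. int (sum_list v)) vs"
    and rng: "\<forall>v\<in>set vs. v \<in> arr_index ks \<or> v = replicate (length ks) 0"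
    and cov: "{v\<in>arr_index ks. B v \<noteq> 0} \<subseteq> set vs"
    and sn: "sum_list nu = n"
  shows "\<exists>x0\<in>TX n ks. arr n ks x0 = B \<and> {g\<in>monomial_group n. actT n g x0 = x0} = block_subgroup n nu
           \<and> (\<forall>h\<in>block_subgroup n nu. block_char n nu w h = coefT n h x0)"
proof -
  let ?m = "length ks"
  let ?AI = "arr_index ks"
  define F where "F = (\<lambda>a. vs ! bk nu a)"
  have bkp: "a < n \<Longrightarrow> bk nu a < length vs \<and> a \<in> block nu (bk nu a)" for a
    using bk_props[of a nu] sn len by simp
  have Fset: "a < n \<Longrightarrow> F a \<in> set vs" for a unfolding F_def using bkp by simp
  have Flen: "a < n \<Longrightarrow> length (F a) = ?m" for a
    using Fset rng unfolding arr_index_def by fastforce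
  have Fr: "a < n \<Longrightarrow> F a \<in> ?AI \<or> F a = replicate ?m 0" for a using Fset rng by blast
  define x0 where "x0 = map (\<lambda>j. \<Sum>a\<in>{..<n}. replicate_mset (F a ! j) a) [0..<?m]"
  have cnt0: "count (x0 ! j) c = (if c < n then F c ! j else 0)" if j: "j < ?m" for j c
  proof -
    have "count (x0 ! j) c = (\<Sum>a\<in>{..<n}. if a = c then F a ! j else 0)"
      unfolding x0_def using j by (simp add: count_sum)
    also have "\<dots> = (if c < n then F c ! j else 0)" by simp
    finally show ?thesis .
  qed
  have lx0: "length x0 = ?m" unfolding x0_def by simp
  have fx0: "fx x0 a = F a" if a: "a < n" for a
    using Flen[OF a] lx0 cnt0 a unfolding fx_def by (intro nth_equalityI) auto
  have fib: "card {a\<in>{..<n}. F a = v} = B v" if v: "v \<in> ?AI" for v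
  proof (cases "v \<in> set vs")
    case True
    then obtain b0 where b0: "b0 < length vs" "vs ! b0 = v" by (metis in_set_conv_nth)
    have "{a\<in>{..<n}. F a = v} = {a\<in>{..<sum_list nu}. bk nu a = b0}"
      using bkp b0 dist sn unfolding F_def by (auto simp: nth_eq_iff_index_eq)
    also have "\<dots> = block nu b0" using block_eq_bk[of b0 nu] b0 len by simp
    finally have "card {a\<in>{..<n}. F a = v} = nu ! b0" using card_block[of b0 nu] b0 len by simp
    also have "\<dots> = B v" using nu b0 cnt v by simp
    finally show ?thesis .
  next
    case False
    then have "B v = 0" using cov v by blast
    moreover have "{a\<in>{..<n}. F a = v} = {}" using Fset False by blast
    ultimately show ?thesis by simp
  qed
  have x0TX: "x0 \<in> TX n ks"
  proof -
    have "set_mset (x0 ! j) \<subseteq> {..<n} \<and> size (x0 ! j) = ks ! j" if j: "j < ?m" for j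
    proof
      show s: "set_mset (x0 ! j) \<subseteq> {..<n}" using cnt0[OF j] by (auto split: if_splits simp flip: count_greater_zero_iff)
      have "size (x0 ! j) = (\<Sum>a\<in>{..<n}. count (x0 ! j) a)" using s by (simp add: sum_count_size)
      also have "\<dots> = (\<Sum>a\<in>{..<n}. F a ! j)" using cnt0[OF j] by simp
      also have "\<dots> = (\<Sum>v\<in>?AI. v ! j * card {a\<in>{..<n}. F a = v})"
      proof -
        have "\<forall>a\<in>{..<n}. F a \<notin> ?AI \<longrightarrow> F a ! j = 0" using Fr j by (metis lessThan_iff nth_replicate)
        from sum_fibers[OF _ finite_arr_index this] show ?thesis by simp
      qed
      also have "\<dots> = (\<Sum>v\<in>?AI. v ! j * B v)" using fib by simp
      also have "\<dots> = ks ! j" using B j unfolding arrays_def by blast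
      finally show "size (x0 ! j) = ks ! j" .
    qed
    then show ?thesis unfolding TX_eq using lx0 by simp
  qed
  have arr0: "arr n ks x0 = B"
  proof
    fix v show "arr n ks x0 v = B v"
    proof (cases "v \<in> ?AI")
      case True
      have "{a\<in>{..<n}. fx x0 a = v} = {a\<in>{..<n}. F a = v}" using fx0 by auto
      then show ?thesis unfolding arr_def using True fib by simp
    next
      case False then show ?thesis unfolding arr_def using B unfolding arrays_def by simp
    qed
  qed
  have Finj: "a < n \<Longrightarrow> a' < n \<Longrightarrow> F a = F a' \<longleftrightarrow> bk nu a = bk nu a'" for a a'
    unfolding F_def using bkp dist by (simp add: nth_eq_iff_index_eq)
  have stab_iff: "actT n g x0 = x0 \<longleftrightarrow> (\<forall>a<n. bk nu (sg n g a) = bk nu a)" if g: "g \<in> monomial_group n" for g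
  proof
    assume eq: "actT n g x0 = x0"
    show "\<forall>a<n. bk nu (sg n g a) = bk nu a"
    proof (intro allI impI)
      fix a assume a: "a < n"
      have "F (sg n g a) = F a" using fx_act[OF g x0TX a] eq fx0 a sg_lt[OF g a] by simp
      then show "bk nu (sg n g a) = bk nu a" using Finj a sg_lt[OF g a] by simp
    qed
  next
    assume H: "\<forall>a<n. bk nu (sg n g a) = bk nu a"
    show "actT n g x0 = x0"
    proof (rule fx_inj[OF actT_TX[OF g x0TX] x0TX], intro allI impI)
      fix b assume b: "b < n"
      then obtain a where a: "a < n" "b = sg n g a" using sg_image[OF g] by (metis imageE lessThan_iff)
      have "fx (actT n g x0) b = F a" using fx_act[OF g x0TX a(1)] fx0 a by simp
      also have "\<dots> = F b" using Finj a H sg_lt[OF g] by simp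
      also have "\<dots> = fx x0 b" using fx0 b by simp
      finally show "fx (actT n g x0) b = fx x0 b" .
    qed
  qed
  have bs_iff: "g \<in> block_subgroup n nu \<longleftrightarrow> g \<in> monomial_group n \<and> (\<forall>a<n. bk nu (sg n g a) = bk nu a)" for g
  proof
    assume g: "g \<in> block_subgroup n nu"
    then have gG: "g \<in> monomial_group n" unfolding block_subgroup_def by simp
    have "bk nu (sg n g a) = bk nu a" if a: "a < n" for a
    proof -
      have "g (sg n g a) a \<noteq> 0" using sg_nz[OF gG a] .
      then obtain b where "b < length nu" "sg n g a \<in> block nu b" "a \<in> block nu b"
        using g unfolding block_subgroup_def by blast
      then show ?thesis using bk_eq by metis
    qed
    then show "g \<in> monomial_group n \<and> (\<forall>a<n. bk nu (sg n g a) = bk nu a)" using gG by simp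
  next
    assume g: "g \<in> monomial_group n \<and> (\<forall>a<n. bk nu (sg n g a) = bk nu a)"
    have "\<exists>b<length nu. i \<in> block nu b \<and> j \<in> block nu b" if "g i j \<noteq> 0" for i j
    proof -
      have j: "j < n" and i: "i = sg n g j" using mg_out[OF conjunct1[OF g] that] sg_unique[OF conjunct1[OF g] that] by auto
      have "i \<in> block nu (bk nu i)" "bk nu i < length nu" using bkp sg_lt[OF conjunct1[OF g] j] i len by auto
      moreover have "bk nu i = bk nu j" using g i j by simp
      ultimately show ?thesis using bkp[OF j] by metis
    qed
    then show "g \<in> block_subgroup n nu" unfolding block_subgroup_def using g by blast
  qed
  have stab: "{g\<in>monomial_group n. actT n g x0 = x0} = block_subgroup n nu"
    using stab_iff bs_iff by blast
  have chr: "block_char n nu w h = coefT n h x0" if hH: "h \<in> block_subgroup n nu" for h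
  proof -
    have h: "h \<in> monomial_group n" using hH unfolding block_subgroup_def by simp
    define e where "e = (\<lambda>a. h (sg n h a) a)"
    have "coefT n h x0 = (\<Prod>j<?m. \<Prod>a<n. e a ^ (F a ! j))"
    proof -
      have "cm n h (x0 ! j) = (\<Prod>a<n. e a ^ (F a ! j))" if j: "j < ?m" for j
      proof -
        have "set_mset (x0 ! j) \<subseteq> {..<n}" using x0TX j unfolding TX_eq by auto
        then have "cm n h (x0 ! j) = (\<Prod>a<n. e a ^ count (x0 ! j) a)"
          unfolding cm_def e_def by (intro prod_mset_image_count) auto
        also have "\<dots> = (\<Prod>a<n. e a ^ (F a ! j))" using cnt0[OF j] by simp
        finally show ?thesis .
      qed
      then show ?thesis unfolding coefT_def lx0 by simp
    qed
    also have "\<dots> = (\<Prod>a<n. \<Prod>j<?m. e a ^ (F a ! j))" by (rule prod.swap)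
    also have "\<dots> = (\<Prod>a<n. e a ^ sum_list (F a))"
    proof (intro prod.cong refl)
      fix a assume "a \<in> {..<n}"
      then have "sum_list (F a) = (\<Sum>j<?m. F a ! j)" using Flen by (simp add: sum_list_sum_nth atLeast0LessThan)
      then show "(\<Prod>j<?m. e a ^ (F a ! j)) = e a ^ sum_list (F a)" by (simp add: power_sum)
    qed
    finally have c: "coefT n h x0 = (\<Prod>a<n. e a ^ sum_list (F a))" .
    have "block_char n nu w h = (\<Prod>b<length nu. \<Prod>j\<in>block nu b. e j ^ sum_list (F j))"
    proof (unfold block_char_def, intro prod.cong refl)
      fix b assume b: "b \<in> {..<length nu}"
      have bsub: "block nu b \<subseteq> {..<n}" using block_sub[of b nu] b sn by auto
      have "(\<Prod>j\<in>block nu b. colent n h j) = (\<Prod>j\<in>block nu b. e j)"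
        using colent_eq[OF h] bsub unfolding e_def by (intro prod.cong refl) auto
      moreover have "w ! b = int (sum_list (vs ! b))" using w b len by simp
      moreover have "F j = vs ! b" if "j \<in> block nu b" for j
        unfolding F_def using bk_eq[OF that] b by simp
      ultimately show "(\<Prod>j\<in>block nu b. colent n h j) powi (w ! b) = (\<Prod>j\<in>block nu b. e j ^ sum_list (F j))"
        by (simp add: prod_power_distrib)
    qed
    also have "\<dots> = (\<Prod>j\<in>(\<Union>b<length nu. block nu b). e j ^ sum_list (F j))"
    proof (rule prod.UNION_disjoint[symmetric])
      show "finite {..<length nu}" by simp
      show "\<forall>b\<in>{..<length nu}. finite (block nu b)" by (simp add: block_def)
      show "\<forall>i\<in>{..<length nu}. \<forall>j\<in>{..<length nu}. i \<noteq> j \<longrightarrow> block nu i \<inter> block nu j = {}"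
        by (metis block_uniq disjoint_iff)
    qed
    also have "\<dots> = (\<Prod>a<n. e a ^ sum_list (F a))" unfolding blocks_union sn ..
    finally show ?thesis using c by simp
  qed
  show ?thesis using x0TX arr0 stab chr by blast
qed



lemma orbit_iso:
  assumes B: "B \<in> arrays n ks"
  shows "mono_iso (monomial_group n) ({xs\<in>TX n ks. arr n ks xs = B}, TK n ks)
           (Mtilde n (map (lam_part ks B) [1..<Suc (sum_list ks)]))"
proof -
  define lams where "lams = map (lam_part ks B) [1..<Suc (sum_list ks)]"
  define m0 where "m0 = sum_list (map sum_list lams)"
  define nu where "nu = (if n - m0 = 0 then [] else [n - m0]) @ concat lams"
  define w where "w = (if n - m0 = 0 then [] else [0]) @
           concat (map (\<lambda>(i, lam). replicate (length lam) (int i)) (zip [1..<Suc (length lams)] lams))"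
  obtain vs where vs: "length vs = length nu" "distinct vs"
     "nu = map (\<lambda>v. if v \<in> arr_index ks then B v else n - m0) vs"
     "w = map (\<lambda>v. int (sum_list v)) vs"
     "\<forall>v\<in>set vs. v \<in> arr_index ks \<or> v = replicate (length ks) 0"
     "{v\<in>arr_index ks. B v \<noteq> 0} \<subseteq> set vs" "sum_list nu = n"
    using vs_exists[OF B] unfolding lams_def[symmetric] m0_def[symmetric] nu_def[symmetric] w_def[symmetric]
    by blast
  obtain x0 where x0: "x0 \<in> TX n ks" "arr n ks x0 = B"
    "{g\<in>monomial_group n. actT n g x0 = x0} = block_subgroup n nu"
    "\<forall>h\<in>block_subgroup n nu. block_char n nu w h = coefT n h x0"
    using base_point[where cnt="\<lambda>v. if v \<in> arr_index ks then B v else n - m0", OF B vs(1,2,3) _ vs(4,5,6,7)]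
    by auto
  have Mt: "Mtilde n lams = ind_char (mmul n) (monomial_group n) (block_subgroup n nu) (block_char n nu w)"
    unfolding Mtilde_def Let_def Mrep_def m0_def[symmetric] nu_def[symmetric] w_def[symmetric] ..
  let ?X = "{xs\<in>TX n ks. arr n ks xs = B}"
  have "mono_iso (monomial_group n) (?X, TK n ks) (ind_char (mmul n) (monomial_group n) (block_subgroup n nu) (block_char n nu w))"
  proof (rule mono_ind[where act="actT n" and coef="coefT n" and e="idm n" and iv="invm n" and xz=x0])
    show "\<And>g h. g \<in> monomial_group n \<Longrightarrow> h \<in> monomial_group n \<Longrightarrow> mmul n g h \<in> monomial_group n"
      by (rule mmul_closed)
    show "\<And>g h k. g \<in> monomial_group n \<Longrightarrow> h \<in> monomial_group n \<Longrightarrow> k \<in> monomial_group n \<Longrightarrow>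
        mmul n (mmul n g h) k = mmul n g (mmul n h k)" by (rule mmul_assoc)
    show "idm n \<in> monomial_group n" by (rule idm_mg)
    show "\<And>g. g \<in> monomial_group n \<Longrightarrow> mmul n (idm n) g = g" by (rule idm_left)
    show "\<And>g. g \<in> monomial_group n \<Longrightarrow> invm n g \<in> monomial_group n" by (rule invm_mg)
    show "\<And>g. g \<in> monomial_group n \<Longrightarrow> mmul n (invm n g) g = idm n" by (rule invm_left)
    show "\<And>g. g \<in> monomial_group n \<Longrightarrow> mmul n g (invm n g) = idm n" by (rule invm_right)
    show "finite ?X" using finite_TX by simp
    show "\<And>g x. g \<in> monomial_group n \<Longrightarrow> x \<in> ?X \<Longrightarrow> actT n g x \<in> ?X"
      using actT_TX arr_act by (metis (no_types, lifting) mem_Collect_eq)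
    show "\<And>g h x. g \<in> monomial_group n \<Longrightarrow> h \<in> monomial_group n \<Longrightarrow> x \<in> ?X \<Longrightarrow>
        actT n (mmul n g h) x = actT n g (actT n h x)" using actT_mul by (metis (no_types, lifting) mem_Collect_eq)
    show "\<And>x. x \<in> ?X \<Longrightarrow> actT n (idm n) x = x" using actT_idm by (metis (no_types, lifting) mem_Collect_eq)
    show "\<And>g h x. g \<in> monomial_group n \<Longrightarrow> h \<in> monomial_group n \<Longrightarrow> x \<in> ?X \<Longrightarrow>
        coefT n (mmul n g h) x = coefT n g (actT n h x) * coefT n h x" using coefT_mul by (metis (no_types, lifting) mem_Collect_eq)
    show "\<And>g x. g \<in> monomial_group n \<Longrightarrow> x \<in> ?X \<Longrightarrow> coefT n g x \<noteq> 0" using coefT_nz by (metis (no_types, lifting) mem_Collect_eq)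
    show "\<And>g x x'. g \<in> monomial_group n \<Longrightarrow> x \<in> ?X \<Longrightarrow> x' \<in> ?X \<Longrightarrow>
        TK n ks g x' x = (if x' = actT n g x then coefT n g x else 0)" using TK_formula by (metis (no_types, lifting) mem_Collect_eq)
    show "x0 \<in> ?X" using x0 by simp
    show "\<And>x. x \<in> ?X \<Longrightarrow> \<exists>g\<in>monomial_group n. actT n g x0 = x"
    proof -
      fix x assume "x \<in> ?X"
      then show "\<exists>g\<in>monomial_group n. actT n g x0 = x" using orbit_trans[of x0 n ks x] x0 by simp
    qed
    show "block_subgroup n nu = {g\<in>monomial_group n. actT n g x0 = x0}" using x0 by simp
    show "\<And>h. h \<in> block_subgroup n nu \<Longrightarrow> block_char n nu w h = coefT n h x0" using x0 by simp
  qed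
  then show ?thesis unfolding lams_def[symmetric] Mt .
qed

theorem proposition3p8:
  fixes n :: nat and ks :: "nat list"
  shows "rep_iso (monomial_group n)
           (tensor_list (map (\<lambda>k. symrep k (defrep n)) ks))
           (dsum (arrays n ks) (\<lambda>B. Mtilde n (map (lam_part ks B) [1..<Suc (sum_list ks)])))"
proof -
  have T: "tensor_list (map (\<lambda>k. symrep k (defrep n)) ks) = (TX n ks, TK n ks)"
    unfolding TX_def TK_def by simp
  have "mono_iso (monomial_group n) (TX n ks, TK n ks)
           (dsum (arrays n ks) (\<lambda>B. Mtilde n (map (lam_part ks B) [1..<Suc (sum_list ks)])))"
  proof (rule mono_dsum[where \<beta> = "arr n ks"])
    show "finite (arrays n ks)" by (rule finite_arrays)
    show "finite (TX n ks)" by (rule finite_TX)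
    show "\<forall>x\<in>TX n ks. arr n ks x \<in> arrays n ks" using arr_arrays by blast
    show "\<forall>B\<in>arrays n ks. mono_iso (monomial_group n) ({x \<in> TX n ks. arr n ks x = B}, TK n ks)
        (Mtilde n (map (lam_part ks B) [1..<Suc (sum_list ks)]))" using orbit_iso by blast
    show "\<forall>g\<in>monomial_group n. \<forall>x\<in>TX n ks. \<forall>x'\<in>TX n ks. arr n ks x' \<noteq> arr n ks x \<longrightarrow> TK n ks g x' x = 0"
      using TK_formula arr_act by metis
  qed
  then show ?thesis unfolding T by (rule mono_rep_iso)
qed


end
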